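(* Let $\mathcal{M}_\Sigma$ be a trace monoid, let $p\in(0,p_\Sigma)$ and let $a_1\in\Sigma$. Then $\mu_{\Sigma\setminus\{a_1\}}(p)>0$, and the real number $$r=p\,\frac{\mu_{\Sigma\setminus\mathscr{L}(a_1)}(p)}{\mu_{\Sigma\setminus\{a_1\}}(p)}$$ satisfies $r=1-\mu_\Sigma(p)/\mu_{\Sigma\setminus\{a_1\}}(p)$. Furthermore, let $T\subseteq\Sigma$ with $a_1\in T$, let $\xi$ be a random trace with law $D^{p}_{\Sigma,T}$, and let $\xi=U_0\cdot\ldots\cdot U_K$ be its decomposition with $U_0,\dots,U_{K-1}\in\mathrm{Pyr}(a_1)$ and $U_K\in\mathcal{M}_{\Sigma\setminus\{a_1\}}$ (so $K=|\xi|_{a_1}$). Then: (1) $K$ is geometric with parameter $r$: $\mathbb{P}(K=k)=(1-r)r^k$ for all integers $k\geqslant0$; (2) for every $k\geqslant0$, conditionally on $\{K=k\}$: (a) $U_0,\dots,U_k$ are independent; (b) each of the traces $U_i\cdot a_1^{-1}$ for $0\leqslant i\leqslant k-1$ (i.e. the unique trace $w$ with $U_i=w\cdot a_1$) has law $D^{p}_{\Sigma\setminus\{a_1\},\mathscr{L}(a_1)}$; (c) $U_k$ has law $D^{p}_{\Sigma\setminus\{a_1\},T}$.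
   Context: Let $\Sigma$ be a finite alphabet and $\mathcal{R}$ a reflexive and symmetric binary relation on $\Sigma$. The trace monoid $\mathcal{M}_\Sigma$ is the quotient of $\Sigma^*$ by the congruence generated by $ab=ba$ for all $(a,b)\notin\mathcal{R}$; the unit is $\mathbf{e}$. For $\Sigma'\subseteq\Sigma$, $\mathcal{M}_{\Sigma'}$ is the submonoid generated by $\Sigma'$. $|x|$ is the length of $x$, $|x|_a$ the number of occurrences of $a$, and $\max(x)$ the set of letters $a$ with $x=y\cdot a$ for some trace $y$. $\mathscr{L}(a)=\{b\in\Sigma:(a,b)\in\mathcal{R}\}$. $\mathrm{Pyr}(a_1)=\{z\cdot a_1: z\in\mathcal{M}_{\Sigma\setminus\{a_1\}},\ \max(z)\subseteq\mathscr{L}(a_1)\}$; every trace has a unique factorization $u_0\cdots u_k$ with $u_0,\dots,u_{k-1}\in\mathrm{Pyr}(a_1)$, $u_k\in\mathcal{M}_{\Sigma\setminus\{a_1\}}$. For $S\subseteq\Sigma$, a clique of $S$ is a subset of $S$ of pairwise non-$\mathcal{R}$-related letters (empty set included); $\mu_S(X)=\sum_{\gamma\text{ clique of }S}(-1)^{|\gamma|}X^{|\gamma|}$, $\mu_\emptyset=1$. For $S\neq\emptyset$, $p_S$ is the unique root of smallest modulus of $\mu_S$ (real, $0<p_S\leqslant1$); $p_\emptyset=+\infty$. For $p\in(0,p_S)$, $\sum_{x\in\mathcal{M}_S}p^{|x|}=1/\mu_S(p)<\infty$ and $B_{S,p}$ is the probability distribution on $\mathcal{M}_S$ with $B_{S,p}(\{x\})=\mu_S(p)p^{|x|}$.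 For $T\subseteq\Sigma$, $D^{p}_{S,T}$ denotes the conditional distribution $B_{S,p}(\,\cdot\mid\max(\xi)\subseteq T)$ on $\mathcal{M}_S$ (this event has positive probability). *)

theory Defs
  imports "HOL-Analysis.Analysis"
begin

text \<open>Trace monoids. The dependence relation R is a set of pairs of letters.
  Words are lists; traces are equivalence classes of words (sets of lists).\<close>

definition swap_step :: "('a \<times> 'a) set \<Rightarrow> ('a list \<times> 'a list) set" where
  "swap_step R = {(u @ [a, b] @ v, u @ [b, a] @ v) | u v a b. (a, b) \<notin> R}"

definition teq :: "('a \<times> 'a) set \<Rightarrow> ('a list \<times> 'a list) set" where
  "teq R = (swap_step R \<union> (swap_step R)\<inverse>)\<^sup>*"

definition tr :: "('a \<times> 'a) set \<Rightarrow> 'a list \<Rightarrow> 'a list set" where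
  "tr R w = {v. (w, v) \<in> teq R}"

definition tmon :: "('a \<times> 'a) set \<Rightarrow> 'a set \<Rightarrow> 'a list set set" where
  "tmon R S = tr R ` lists S"

definition rep :: "'a list set \<Rightarrow> 'a list" where
  "rep x = (SOME w. w \<in> x)"

definition tconc :: "('a \<times> 'a) set \<Rightarrow> 'a list set \<Rightarrow> 'a list set \<Rightarrow> 'a list set" where
  "tconc R x y = tr R (rep x @ rep y)"

definition tunit :: "('a \<times> 'a) set \<Rightarrow> 'a list set" where
  "tunit R = tr R []"

definition tprod :: "('a \<times> 'a) set \<Rightarrow> 'a list set list \<Rightarrow> 'a list set" where
  "tprod R us = foldr (tconc R) us (tunit R)"

definition tlen :: "'a list set \<Rightarrow> nat" where
  "tlen x = length (rep x)"

definition tcount :: "'a list set \<Rightarrow> 'a \<Rightarrow> nat" where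
  "tcount x a = count_list (rep x) a"

definition tmax :: "('a \<times> 'a) set \<Rightarrow> 'a list set \<Rightarrow> 'a set" where
  "tmax R x = {a. \<exists>y \<in> range (tr R). x = tconc R y (tr R [a])}"

definition Lnb :: "('a \<times> 'a) set \<Rightarrow> 'a set \<Rightarrow> 'a \<Rightarrow> 'a set" where
  "Lnb R Sg a = {b \<in> Sg. (a, b) \<in> R}"

definition Pyr :: "('a \<times> 'a) set \<Rightarrow> 'a set \<Rightarrow> 'a \<Rightarrow> 'a list set set" where
  "Pyr R Sg a1 = {tconc R z (tr R [a1]) | z. z \<in> tmon R (Sg - {a1}) \<and> tmax R z \<subseteq> Lnb R Sg a1}"

text \<open>The (unique) decomposition u_0 ... u_k of a trace, as a list of length k+1.\<close>
definition pyr_decomp :: "('a \<times> 'a) set \<Rightarrow> 'a set \<Rightarrow> 'a \<Rightarrow> 'a list set \<Rightarrow> 'a list set list" where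
  "pyr_decomp R Sg a1 x = (THE us. us \<noteq> [] \<and> tprod R us = x \<and>
      (\<forall>i < length us - 1. us ! i \<in> Pyr R Sg a1) \<and> last us \<in> tmon R (Sg - {a1}))"

definition cliques :: "('a \<times> 'a) set \<Rightarrow> 'a set \<Rightarrow> 'a set set" where
  "cliques R S = {\<gamma>. \<gamma> \<subseteq> S \<and> (\<forall>a\<in>\<gamma>. \<forall>b\<in>\<gamma>. a \<noteq> b \<longrightarrow> (a, b) \<notin> R)}"

definition mu :: "('a \<times> 'a) set \<Rightarrow> 'a set \<Rightarrow> 'b::comm_ring_1 \<Rightarrow> 'b" where
  "mu R S X = (\<Sum>\<gamma>\<in>cliques R S. (-1) ^ card \<gamma> * X ^ card \<gamma>)"

definition p_root :: "('a \<times> 'a) set \<Rightarrow> 'a set \<Rightarrow> real" where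
  "p_root R S = Inf (cmod ` {z::complex. mu R S z = 0})"

definition B_weight :: "('a \<times> 'a) set \<Rightarrow> 'a set \<Rightarrow> real \<Rightarrow> 'a list set \<Rightarrow> real" where
  "B_weight R S p x = (if x \<in> tmon R S then mu R S p * p ^ tlen x else 0)"

definition B_prob :: "('a \<times> 'a) set \<Rightarrow> 'a set \<Rightarrow> real \<Rightarrow> 'a list set set \<Rightarrow> real" where
  "B_prob R S p A = infsum (B_weight R S p) A"

definition D_prob :: "('a \<times> 'a) set \<Rightarrow> 'a set \<Rightarrow> 'a set \<Rightarrow> real \<Rightarrow> 'a list set set \<Rightarrow> real" where
  "D_prob R S T p A = B_prob R S p (A \<inter> {x. tmax R x \<subseteq> T}) / B_prob R S p {x. tmax R x \<subseteq> T}"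

end

theory Submission
  imports Defs
begin


abbreviation stp :: "('a \<times> 'a) set \<Rightarrow> ('a list \<times> 'a list) set" where
  "stp R \<equiv> swap_step R \<union> (swap_step R)\<inverse>"

lemma teq_refl[simp]: "(u,u) \<in> teq R" by (simp add: teq_def)

lemma teq_sym: "(u,v) \<in> teq R \<Longrightarrow> (v,u) \<in> teq R"
proof -
  assume "(u,v) \<in> teq R"
  hence "(v,u) \<in> ((stp R)\<inverse>)\<^sup>*" unfolding teq_def by (simp add: rtrancl_converse)
  moreover have "(stp R)\<inverse> = stp R" by auto
  ultimately show ?thesis unfolding teq_def by simp
qed

lemma teq_trans: "(u,v) \<in> teq R \<Longrightarrow> (v,w) \<in> teq R \<Longrightarrow> (u,w) \<in> teq R"
  unfolding teq_def by (rule rtrancl_trans)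

lemma teq_swap: "(d,e) \<notin> R \<Longrightarrow> (x@[d,e]@y, x@[e,d]@y) \<in> teq R"
  unfolding teq_def swap_step_def by (rule r_into_rtrancl) blast

lemma stp_cases:
  assumes "sym R" "(s,t) \<in> stp R"
  obtains x y d e where "s = x @ [d,e] @ y" "t = x @ [e,d] @ y" "(d,e) \<notin> R"
  using assms unfolding swap_step_def sym_def by blast

lemma stp_mset: "(s,t) \<in> stp R \<Longrightarrow> mset s = mset t"
  unfolding swap_step_def by auto

lemma teq_mset: "(s,t) \<in> teq R \<Longrightarrow> mset s = mset t"
  unfolding teq_def by (induct rule: rtrancl_induct) (simp, metis stp_mset)

lemma teq_length: "(s,t) \<in> teq R \<Longrightarrow> length s = length t"
  by (metis size_mset teq_mset)

lemma teq_set: "(s,t) \<in> teq R \<Longrightarrow> set s = set t"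
  by (metis set_mset_mset teq_mset)

lemma teq_count: "(s,t) \<in> teq R \<Longrightarrow> count_list s a = count_list t a"
  by (metis count_mset teq_mset)

lemma stp_app:
  assumes "(s,t) \<in> stp R" shows "(w@s@z, w@t@z) \<in> stp R"
  using assms
proof
  assume "(s,t) \<in> swap_step R"
  then obtain u v a b where "s = u@[a,b]@v" "t = u@[b,a]@v" "(a,b)\<notin>R" by (auto simp: swap_step_def)
  hence "w@s@z = (w@u)@[a,b]@(v@z)" "w@t@z = (w@u)@[b,a]@(v@z)" "(a,b)\<notin>R" by simp_all
  hence "(w@s@z, w@t@z) \<in> swap_step R" unfolding swap_step_def by blast
  thus ?thesis by blast
next
  assume "(s,t) \<in> (swap_step R)\<inverse>"
  then obtain u v a b where "t = u@[a,b]@v" "s = u@[b,a]@v" "(a,b)\<notin>R" by (auto simp: swap_step_def)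
  hence "w@t@z = (w@u)@[a,b]@(v@z)" "w@s@z = (w@u)@[b,a]@(v@z)" "(a,b)\<notin>R" by simp_all
  hence "(w@t@z, w@s@z) \<in> swap_step R" unfolding swap_step_def by blast
  thus ?thesis by blast
qed

lemma teq_app: "(s,t) \<in> teq R \<Longrightarrow> (w@s@z, w@t@z) \<in> teq R"
  unfolding teq_def
proof (induct rule: rtrancl_induct)
  case base then show ?case by simp
next
  case (step y z') then show ?case by (meson rtrancl.simps stp_app)
qed

lemma teq_append: "(s,t) \<in> teq R \<Longrightarrow> (s',t') \<in> teq R \<Longrightarrow> (s@s', t@t') \<in> teq R"
  using teq_app[of s t R "[]" s'] teq_app[of s' t' R t "[]"] by (auto intro: teq_trans)

lemma last_letter_aux:
  assumes "sym R"
  shows "length u = n \<Longrightarrow> (u@[a], t) \<in> teq R \<Longrightarrow> t = v@[b] \<Longrightarrow>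
    (a = b \<and> (u,v) \<in> teq R) \<or> (a \<noteq> b \<and> (a,b) \<notin> R \<and> (\<exists>w. (u,w@[b]) \<in> teq R \<and> (v,w@[a]) \<in> teq R))"
proof (induction n arbitrary: u a t v b rule: less_induct)
  case (less n)
  from less.prems(2) have "(u@[a], t) \<in> (stp R)\<^sup>*" by (simp add: teq_def)
  then show ?case using less.prems(3)
  proof (induction t arbitrary: v b rule: rtrancl_induct)
    case base
    then show ?case by simp
  next
    case (step m t)
    have hm: "(u@[a], m) \<in> teq R" using step.hyps(1) by (simp add: teq_def)
    show ?case
    proof (cases "m = t")
      case True thus ?thesis using step.IH step.prems by simp
    next
      case False
      from stp_cases[OF assms step.hyps(2)] obtain x y d e where md: "m = x@[d,e]@y"
        and td: "t = x@[e,d]@y" and de: "(d,e)\<notin>R" by blast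
      with False have dne: "d \<noteq> e" by auto
      have ed: "(e,d) \<notin> R" using de assms by (auto simp: sym_def)
      show ?thesis
      proof (cases y rule: rev_cases)
        case Nil
        hence m': "m = (x@[d])@[e]" and v: "v = x@[e]" and b: "b = d" using md td step.prems by auto
        from step.IH[OF m'] have IH: "(a = e \<and> (u, x@[d]) \<in> teq R) \<or>
           (a \<noteq> e \<and> (a,e) \<notin> R \<and> (\<exists>w. (u,w@[e]) \<in> teq R \<and> (x@[d],w@[a]) \<in> teq R))" .
        from IH show ?thesis
        proof
          assume "a = e \<and> (u, x@[d]) \<in> teq R"
          then show ?thesis using v b dne ed by auto
        next
          assume "a \<noteq> e \<and> (a,e) \<notin> R \<and> (\<exists>w. (u,w@[e]) \<in> teq R \<and> (x@[d],w@[a]) \<in> teq R)"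
          then obtain w where ae: "a\<noteq>e" "(a,e)\<notin>R" and uw: "(u,w@[e])\<in>teq R"
            and xw: "(x@[d], w@[a])\<in>teq R" by blast
          have "length (u@[a]) = length m" using teq_length[OF hm] .
          hence len: "length x < n" using less.prems(1) m' by simp
          from less.IH[OF len refl xw refl] show ?thesis
          proof
            assume "d = a \<and> (x,w) \<in> teq R"
            hence "(w@[e], v) \<in> teq R" using v teq_append[of w x R "[e]" "[e]"] teq_sym by auto
            then show ?thesis using uw b \<open>d = a \<and> (x,w) \<in> teq R\<close> teq_trans by blast
          next
            assume "d \<noteq> a \<and> (d,a) \<notin> R \<and> (\<exists>w'. (x,w'@[a]) \<in> teq R \<and> (w,w'@[d]) \<in> teq R)"
            then obtain w' where da: "d\<noteq>a" "(d,a)\<notin>R" and xw': "(x,w'@[a]) \<in> teq R"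
              and ww': "(w,w'@[d]) \<in> teq R" by blast
            have "(u, w'@[d]@[e]) \<in> teq R"
              using uw teq_append[OF ww', of "[e]" "[e]"] teq_trans by fastforce
            moreover have "(w'@[d,e]@[], w'@[e,d]@[]) \<in> teq R" by (rule teq_swap[OF de])
            ultimately have 1: "(u, (w'@[e])@[b]) \<in> teq R" using b teq_trans by fastforce
            have "(v, w'@[a]@[e]) \<in> teq R"
              using v teq_append[OF xw', of "[e]" "[e]"] by simp
            moreover have "(w'@[a,e]@[], w'@[e,a]@[]) \<in> teq R" by (rule teq_swap[OF ae(2)])
            ultimately have 2: "(v, (w'@[e])@[a]) \<in> teq R" using teq_trans by fastforce
            have "(a,b) \<notin> R" using da b assms by (auto simp: sym_def)
            then show ?thesis using 1 2 da b by blast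
          qed
        qed
      next
        case (snoc y' g)
        hence m': "m = (x@[d,e]@y')@[g]" and v: "v = x@[e,d]@y'" and b: "b = g"
          using md td step.prems by auto
        have mv: "(x@[d,e]@y', v) \<in> teq R" using v teq_swap[OF de] by simp
        from step.IH[OF m'] show ?thesis
        proof
          assume "a = g \<and> (u, x@[d,e]@y') \<in> teq R"
          then show ?thesis using mv b teq_trans by blast
        next
          assume "a \<noteq> g \<and> (a,g) \<notin> R \<and> (\<exists>w. (u,w@[g]) \<in> teq R \<and> (x@[d,e]@y',w@[a]) \<in> teq R)"
          then show ?thesis using mv b teq_trans teq_sym by blast
        qed
      qed
    qed
  qed
qed

lemma last_letter:
  assumes "sym R" "(u@[a], v@[b]) \<in> teq R"
  shows "(a = b \<and> (u,v) \<in> teq R) \<or> (a \<noteq> b \<and> (a,b) \<notin> R \<and> (\<exists>w. (u,w@[b]) \<in> teq R \<and> (v,w@[a]) \<in> teq R))"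
  using last_letter_aux[OF assms(1) refl assms(2) refl] .

lemma teq_cancel1: "sym R \<Longrightarrow> (u@[a], v@[a]) \<in> teq R \<Longrightarrow> (u,v) \<in> teq R"
  using last_letter by fastforce

lemma teq_cancel: "sym R \<Longrightarrow> (u@w, v@w) \<in> teq R \<Longrightarrow> (u,v) \<in> teq R"
proof (induction w rule: rev_induct)
  case Nil then show ?case by simp
next
  case (snoc c w)
  then show ?case using teq_cancel1[of R "u@w" c "v@w"] by simp
qed



lemma tr_eqI: "(u,v) \<in> teq R \<Longrightarrow> tr R u = tr R v"
  unfolding tr_def using teq_trans teq_sym by blast

lemma tr_eq_iff: "tr R u = tr R v \<longleftrightarrow> (u,v) \<in> teq R"
proof
  assume h: "tr R u = tr R v"
  have "v \<in> tr R v" by (simp add: tr_def)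
  hence "v \<in> tr R u" using h by simp
  thus "(u,v) \<in> teq R" by (simp add: tr_def)
qed (rule tr_eqI)

lemma rep_tr: "(w, rep (tr R w)) \<in> teq R"
proof -
  have "w \<in> tr R w" by (simp add: tr_def)
  hence "rep (tr R w) \<in> tr R w" unfolding rep_def by (rule someI)
  thus ?thesis by (simp add: tr_def)
qed

lemma tr_rep: "tr R (rep (tr R w)) = tr R w"
  using rep_tr tr_eqI teq_sym by metis

lemma tr_rep': "x \<in> range (tr R) \<Longrightarrow> tr R (rep x) = x"
  using tr_rep by blast

lemma tconc_tr[simp]: "tconc R (tr R u) (tr R v) = tr R (u@v)"
  unfolding tconc_def by (rule tr_eqI[OF teq_sym], rule teq_append[OF rep_tr rep_tr])

lemma tlen_tr[simp]: "tlen (tr R w) = length w"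
  unfolding tlen_def using rep_tr teq_length by metis

lemma tcount_tr[simp]: "tcount (tr R w) a = count_list w a"
  unfolding tcount_def using rep_tr teq_count by metis

lemma tmon_iff: "x \<in> tmon R S \<longleftrightarrow> (\<exists>w. set w \<subseteq> S \<and> x = tr R w)"
  unfolding tmon_def by (auto simp: in_lists_conv_set)

lemma tr_in_tmon_iff[simp]: "tr R w \<in> tmon R S \<longleftrightarrow> set w \<subseteq> S"
  unfolding tmon_iff tr_eq_iff by (metis teq_refl teq_set)

lemma tmax_tr: "tmax R (tr R w) = {a. \<exists>y. (w, y@[a]) \<in> teq R}"
proof -
  have "tmax R (tr R w) = {a. \<exists>y. tr R w = tr R (y@[a])}"
    unfolding tmax_def by (auto intro: rangeI)
  also have "\<dots> = {a. \<exists>y. (w, y@[a]) \<in> teq R}"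
    by (simp add: tr_eq_iff)
  finally show ?thesis .
qed

lemma tmax_subset: "tmax R (tr R w) \<subseteq> set w"
  unfolding tmax_tr using teq_set by fastforce

lemma tmax_Nil[simp]: "tmax R (tr R []) = {}"
  using tmax_subset by fastforce

lemma tmax_snoc:
  assumes "sym R"
  shows "tmax R (tr R (y@[a])) = insert a {b \<in> tmax R (tr R y). (a,b) \<notin> R}"
proof (intro set_eqI iffI)
  fix b assume "b \<in> tmax R (tr R (y@[a]))"
  then obtain z where "(y@[a], z@[b]) \<in> teq R" unfolding tmax_tr by blast
  from last_letter[OF assms this] show "b \<in> insert a {b \<in> tmax R (tr R y). (a,b) \<notin> R}"
    unfolding tmax_tr by blast
next
  fix b assume "b \<in> insert a {b \<in> tmax R (tr R y). (a,b) \<notin> R}"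
  then consider "b = a" | "(a,b)\<notin>R" "\<exists>z. (y, z@[b]) \<in> teq R" unfolding tmax_tr by blast
  then show "b \<in> tmax R (tr R (y@[a]))"
  proof cases
    case 1 then show ?thesis unfolding tmax_tr using teq_refl by blast
  next
    case 2
    then obtain z where z: "(y, z@[b]) \<in> teq R" by blast
    have "(y@[a], z@[b]@[a]) \<in> teq R" using teq_append[OF z, of "[a]" "[a]"] by simp
    moreover have "(z@[b,a]@[], z@[a,b]@[]) \<in> teq R"
      by (rule teq_swap) (use 2 assms in \<open>auto simp: sym_def\<close>)
    ultimately have "(y@[a], (z@[a])@[b]) \<in> teq R" using teq_trans by fastforce
    then show ?thesis unfolding tmax_tr by blast
  qed
qed

lemma tmax_app_right: "b \<in> tmax R (tr R t) \<Longrightarrow> b \<in> tmax R (tr R (s@t))"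
proof -
  assume "b \<in> tmax R (tr R t)"
  then obtain y where "(t, y@[b]) \<in> teq R" unfolding tmax_tr by blast
  hence "(s@t@[], s@(y@[b])@[]) \<in> teq R" by (rule teq_app)
  hence "(s@t, (s@y)@[b]) \<in> teq R" by simp
  thus ?thesis unfolding tmax_tr by blast
qed

lemma tmax_app:
  assumes "sym R" "b \<in> tmax R (tr R (s@t))"
  shows "b \<in> tmax R (tr R t) \<or> (b \<in> tmax R (tr R s) \<and> (\<forall>c\<in>set t. (c,b) \<notin> R))"
  using assms(2)
proof (induction t arbitrary: b rule: rev_induct)
  case Nil then show ?case by simp
next
  case (snoc c t)
  have "b \<in> insert c {b \<in> tmax R (tr R (s@t)). (c,b) \<notin> R}"
    using snoc.prems tmax_snoc[OF assms(1), of "s@t" c] by simp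
  then show ?case
  proof
    assume "b = c" then show ?thesis using tmax_snoc[OF assms(1), of t c] by simp
  next
    assume h: "b \<in> {b \<in> tmax R (tr R (s@t)). (c,b) \<notin> R}"
    from snoc.IH[of b] h have "b \<in> tmax R (tr R t) \<or> (b \<in> tmax R (tr R s) \<and> (\<forall>c\<in>set t. (c,b) \<notin> R))" by blast
    then show ?thesis using h tmax_snoc[OF assms(1), of t c] by auto
  qed
qed

lemma tmax_app_sub: "sym R \<Longrightarrow> tmax R (tr R (s@t)) \<subseteq> tmax R (tr R s) \<union> tmax R (tr R t)"
  using tmax_app by fastforce

lemma rf_unique_aux:
  assumes "sym R"
  shows "length u + length u' = n \<Longrightarrow> (v@u, v'@u') \<in> teq R \<Longrightarrow> tmax R (tr R v) \<subseteq> {a} \<Longrightarrow>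
    tmax R (tr R v') \<subseteq> {a} \<Longrightarrow> a \<notin> set u \<Longrightarrow> a \<notin> set u' \<Longrightarrow> (v,v') \<in> teq R \<and> (u,u') \<in> teq R"
proof (induction n arbitrary: u u' v v' rule: less_induct)
  case (less n)
  show ?case
  proof (cases "u = [] \<and> u' = []")
    case True then show ?thesis using less.prems by simp
  next
    case False
    then consider (L) "u \<noteq> []" | (Rt) "u' \<noteq> []" by blast
    then show ?thesis
    proof cases
      case L
      then obtain u0 c where u: "u = u0@[c]" by (metis rev_exhaust)
      have "c \<in> tmax R (tr R (v@u))" unfolding tmax_tr u by (rule CollectI, rule exI[of _ "v@u0"]) simp
      hence "c \<in> tmax R (tr R (v'@u'))" using tr_eqI[OF less.prems(2)] by simp
      hence "c \<in> tmax R (tr R u') \<or> c \<in> tmax R (tr R v')" using tmax_app[OF assms] by blast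
      moreover have "c \<noteq> a" using less.prems(5) u by auto
      ultimately have "c \<in> tmax R (tr R u')" using less.prems(4) by blast
      then obtain u1 where u1: "(u', u1@[c]) \<in> teq R" unfolding tmax_tr by blast
      have "(v'@u', v'@u1@[c]) \<in> teq R" using teq_app[OF u1, of v' "[]"] by simp
      from teq_trans[OF less.prems(2)[unfolded u] this]
      have "((v@u0)@[c], (v'@u1)@[c]) \<in> teq R" by simp
      hence h: "(v@u0, v'@u1) \<in> teq R" using teq_cancel1[OF assms] by blast
      have lu1: "length u1 + 1 = length u'" using teq_length[OF u1] by simp
      have su1: "set u1 \<subseteq> set u'" using teq_set[OF u1] by auto
      have "length u0 + length u1 < n" using less.prems(1) u lu1 by simp
      from less.IH[OF this refl h less.prems(3,4)] less.prems(5,6) u su1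
      have r: "(v,v') \<in> teq R \<and> (u0,u1) \<in> teq R" by auto
      have "(u0@[c], u1@[c]) \<in> teq R" using r teq_append[OF _ teq_refl] by blast
      from teq_trans[OF this teq_sym[OF u1]] r u show ?thesis by simp
    next
      case Rt
      then obtain u0 c where u: "u' = u0@[c]" by (metis rev_exhaust)
      have "c \<in> tmax R (tr R (v'@u'))" unfolding tmax_tr u by (rule CollectI, rule exI[of _ "v'@u0"]) simp
      hence "c \<in> tmax R (tr R (v@u))" using tr_eqI[OF less.prems(2)] by simp
      hence "c \<in> tmax R (tr R u) \<or> c \<in> tmax R (tr R v)" using tmax_app[OF assms] by blast
      moreover have "c \<noteq> a" using less.prems(6) u by auto
      ultimately have "c \<in> tmax R (tr R u)" using less.prems(3) by blast
      then obtain u1 where u1: "(u, u1@[c]) \<in> teq R" unfolding tmax_tr by blast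
      have "(v@u, v@u1@[c]) \<in> teq R" using teq_app[OF u1, of v "[]"] by simp
      from teq_trans[OF teq_sym[OF less.prems(2)[unfolded u]] this]
      have "((v'@u0)@[c], (v@u1)@[c]) \<in> teq R" by simp
      hence h: "(v@u1, v'@u0) \<in> teq R" using teq_cancel1[OF assms] teq_sym by blast
      have lu1: "length u1 + 1 = length u" using teq_length[OF u1] by simp
      have su1: "set u1 \<subseteq> set u" using teq_set[OF u1] by auto
      have "length u1 + length u0 < n" using less.prems(1) u lu1 by simp
      from less.IH[OF this refl h less.prems(3,4)] less.prems(5,6) u su1
      have r: "(v,v') \<in> teq R \<and> (u1,u0) \<in> teq R" by auto
      have "(u1@[c], u0@[c]) \<in> teq R" using r teq_append[OF _ teq_refl] by blast
      from teq_trans[OF u1 this] r u show ?thesis by simp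
    qed
  qed
qed

lemma rf_unique:
  assumes "sym R" "(v@u, v'@u') \<in> teq R" "tmax R (tr R v) \<subseteq> {a}"
    "tmax R (tr R v') \<subseteq> {a}" "a \<notin> set u" "a \<notin> set u'"
  shows "(v,v') \<in> teq R \<and> (u,u') \<in> teq R"
  using rf_unique_aux[OF assms(1) refl assms(2-6)] .

lemma split_aux:
  assumes "sym R"
  shows "length u = n \<Longrightarrow> set u \<subseteq> S - {a} \<Longrightarrow> \<exists>s t. (u@[a], s@[a]@t) \<in> teq R \<and>
     tmax R (tr R s) \<subseteq> Lnb R S a \<and> set s \<subseteq> S - {a} \<and> set t \<subseteq> S - {a}"
proof (induction n arbitrary: u rule: less_induct)
  case (less n)
  show ?case
  proof (cases "tmax R (tr R u) \<subseteq> Lnb R S a")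
    case True
    then show ?thesis using less.prems by (intro exI[of _ u] exI[of _ "[]"]) auto
  next
    case False
    then obtain c where c: "c \<in> tmax R (tr R u)" "c \<notin> Lnb R S a" by blast
    have cS: "c \<in> S - {a}" using c(1) tmax_subset less.prems(2) by fastforce
    hence ac: "(c,a) \<notin> R" using c(2) assms by (auto simp: Lnb_def sym_def)
    obtain u' where u': "(u, u'@[c]) \<in> teq R" using c(1) unfolding tmax_tr by blast
    have "length u' < n" using teq_length[OF u'] less.prems(1) by simp
    moreover have "set u' \<subseteq> S - {a}" using teq_set[OF u'] less.prems(2) by auto
    ultimately obtain s t where st: "(u'@[a], s@[a]@t) \<in> teq R" "tmax R (tr R s) \<subseteq> Lnb R S a"
      "set s \<subseteq> S - {a}" "set t \<subseteq> S - {a}" using less.IH by blast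
    have "(u@[a], u'@[c,a]) \<in> teq R" using teq_append[OF u', of "[a]" "[a]"] by simp
    moreover have "(u'@[c,a], u'@[a,c]) \<in> teq R" using teq_swap[OF ac, of u' "[]"] by simp
    moreover have "(u'@[a,c], s@[a]@(t@[c])) \<in> teq R" using teq_append[OF st(1), of "[c]" "[c]"] by simp
    ultimately have "(u@[a], s@[a]@(t@[c])) \<in> teq R" by (meson teq_trans)
    then show ?thesis using st cS by (intro exI[of _ s] exI[of _ "t@[c]"]) auto
  qed
qed



definition Mset :: "('a \<times> 'a) set \<Rightarrow> 'a set \<Rightarrow> 'a set \<Rightarrow> 'a list set set" where
  "Mset R S T = {x \<in> tmon R S. tmax R x \<subseteq> T}"

definition Pw :: "'a \<Rightarrow> 'a list list \<Rightarrow> 'a list" where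
  "Pw a zs = concat (map (\<lambda>z. z @ [a]) zs)"

definition Phi :: "('a \<times> 'a) set \<Rightarrow> 'a \<Rightarrow> 'a list set list \<Rightarrow> 'a list set \<Rightarrow> 'a list set" where
  "Phi R a ws u = tconc R (tprod R (map (\<lambda>w. tconc R w (tr R [a])) ws)) u"

definition goodz :: "('a \<times> 'a) set \<Rightarrow> 'a set \<Rightarrow> 'a \<Rightarrow> 'a list \<Rightarrow> bool" where
  "goodz R S a z \<longleftrightarrow> set z \<subseteq> S - {a} \<and> tmax R (tr R z) \<subseteq> Lnb R S a"

lemma Pw_Nil[simp]: "Pw a [] = []" by (simp add: Pw_def)
lemma Pw_snoc[simp]: "Pw a (zs@[z]) = Pw a zs @ z @ [a]" by (simp add: Pw_def)
lemma Pw_Cons[simp]: "Pw a (z#zs) = z @ [a] @ Pw a zs" by (simp add: Pw_def)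

lemma tprod_map_tr: "tprod R (map (tr R) ws) = tr R (concat ws)"
  by (induction ws) (simp_all add: tprod_def tunit_def)

lemma Phi_tr: "Phi R a (map (tr R) zs) (tr R u0) = tr R (Pw a zs @ u0)"
proof -
  have e: "map (\<lambda>w. tconc R w (tr R [a])) (map (tr R) zs) = map (tr R) (map (\<lambda>z. z@[a]) zs)"
    by (induction zs) simp_all
  show ?thesis unfolding Phi_def e tprod_map_tr by (simp add: Pw_def)
qed

lemma Pyr_iff: "P \<in> Pyr R S a \<longleftrightarrow> (\<exists>z. goodz R S a z \<and> P = tr R (z@[a]))"
proof
  assume "P \<in> Pyr R S a"
  then obtain w where "set w \<subseteq> S-{a}" "tmax R (tr R w) \<subseteq> Lnb R S a" "P = tconc R (tr R w) (tr R [a])"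
    unfolding Pyr_def tmon_iff by blast
  thus "\<exists>z. goodz R S a z \<and> P = tr R (z@[a])" unfolding goodz_def by auto
next
  assume "\<exists>z. goodz R S a z \<and> P = tr R (z@[a])"
  then obtain z where z: "goodz R S a z" "P = tr R (z@[a])" by blast
  hence "P = tconc R (tr R z) (tr R [a])" "tr R z \<in> tmon R (S - {a})" "tmax R (tr R z) \<subseteq> Lnb R S a"
    unfolding goodz_def by simp_all
  thus "P \<in> Pyr R S a" unfolding Pyr_def by blast
qed

lemma Mset_iff: "x \<in> Mset R S T \<longleftrightarrow> (\<exists>w. set w \<subseteq> S \<and> tmax R (tr R w) \<subseteq> T \<and> x = tr R w)"
  unfolding Mset_def tmon_iff by auto

lemma G_iff: "x \<in> Mset R (S - {a}) (Lnb R S a) \<longleftrightarrow> (\<exists>z. goodz R S a z \<and> x = tr R z)"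
  unfolding Mset_iff goodz_def by auto

lemma pw_props:
  assumes "sym R" "a \<in> S" "\<forall>z\<in>set zs. goodz R S a z"
  shows "tmax R (tr R (Pw a zs)) \<subseteq> {a} \<and> count_list (Pw a zs) a = length zs \<and> set (Pw a zs) \<subseteq> S"
  using assms(3)
proof (induction zs rule: rev_induct)
  case Nil then show ?case by simp
next
  case (snoc z zs)
  hence IH: "tmax R (tr R (Pw a zs)) \<subseteq> {a}" "count_list (Pw a zs) a = length zs" "set (Pw a zs) \<subseteq> S"
    and gz: "goodz R S a z" by auto
  have "tmax R (tr R (Pw a zs @ z)) \<subseteq> {a} \<union> Lnb R S a"
    using tmax_app_sub[OF assms(1), of "Pw a zs" z] IH(1) gz unfolding goodz_def by blast
  hence "tmax R (tr R ((Pw a zs @ z) @ [a])) \<subseteq> {a}"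
    unfolding tmax_snoc[OF assms(1)] by (auto simp: Lnb_def)
  moreover have "count_list z a = 0" using gz unfolding goodz_def by (auto simp: count_list_0_iff)
  ultimately show ?case using IH gz assms(2) unfolding goodz_def by auto
qed

lemma pw_unique:
  assumes "sym R" "a \<in> S"
  shows "\<forall>z\<in>set zs. goodz R S a z \<Longrightarrow> \<forall>z\<in>set zs'. goodz R S a z \<Longrightarrow> (Pw a zs, Pw a zs') \<in> teq R \<Longrightarrow>
    list_all2 (\<lambda>z z'. (z,z') \<in> teq R) zs zs'"
proof (induction zs arbitrary: zs' rule: rev_induct)
  case Nil
  have "count_list (Pw a zs') a = 0" using teq_count[OF Nil.prems(3), of a] by simp
  hence "zs' = []" using pw_props[OF assms Nil.prems(2)] by simp
  then show ?case by simp
next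
  case (snoc z zs)
  have "count_list (Pw a zs') a = length (zs@[z])"
    using teq_count[OF snoc.prems(3), of a] pw_props[OF assms snoc.prems(1)] by simp
  hence "length zs' = Suc (length zs)" using pw_props[OF assms snoc.prems(2)] by simp
  then obtain zs0 z' where zs': "zs' = zs0@[z']" by (metis length_Suc_conv_rev)
  have gz: "goodz R S a z" "goodz R S a z'" and g0: "\<forall>z\<in>set zs. goodz R S a z" "\<forall>z\<in>set zs0. goodz R S a z"
    using snoc.prems zs' by auto
  have "((Pw a zs @ z) @ [a], (Pw a zs0 @ z') @ [a]) \<in> teq R" using snoc.prems(3) zs' by simp
  hence "(Pw a zs @ z, Pw a zs0 @ z') \<in> teq R" by (rule teq_cancel1[OF assms(1)])
  moreover have "a \<notin> set z" "a \<notin> set z'" using gz unfolding goodz_def by auto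
  ultimately have "(Pw a zs, Pw a zs0) \<in> teq R \<and> (z, z') \<in> teq R"
    using rf_unique[OF assms(1)] pw_props[OF assms g0(1)] pw_props[OF assms g0(2)] by blast
  with snoc.IH[OF g0(1) g0(2)] show ?case using zs' by (auto intro!: list_all2_appendI)
qed

lemma decomp_unique:
  assumes "sym R" "a \<in> S" "\<forall>z\<in>set zs. goodz R S a z" "\<forall>z\<in>set zs'. goodz R S a z"
    "set u \<subseteq> S - {a}" "set u' \<subseteq> S - {a}" "(Pw a zs @ u, Pw a zs' @ u') \<in> teq R"
  shows "map (tr R) zs = map (tr R) zs' \<and> tr R u = tr R u'"
proof -
  have "a \<notin> set u" "a \<notin> set u'" using assms(5,6) by auto
  hence "(Pw a zs, Pw a zs') \<in> teq R \<and> (u,u') \<in> teq R"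
    using rf_unique[OF assms(1) assms(7)] pw_props[OF assms(1,2,3)] pw_props[OF assms(1,2,4)] by blast
  hence "list_all2 (\<lambda>z z'. (z,z') \<in> teq R) zs zs'" "tr R u = tr R u'"
    using pw_unique[OF assms(1,2,3,4)] tr_eqI by blast+
  moreover have "list_all2 (\<lambda>z z'. (z,z') \<in> teq R) zs zs' \<Longrightarrow> map (tr R) zs = map (tr R) zs'"
    by (induction rule: list_all2_induct) (simp_all add: tr_eqI)
  ultimately show ?thesis by blast
qed

lemma decomp_exists:
  assumes "sym R" "a \<in> S" "set w \<subseteq> S"
  shows "\<exists>zs u. (\<forall>z\<in>set zs. goodz R S a z) \<and> set u \<subseteq> S - {a} \<and> (w, Pw a zs @ u) \<in> teq R"
  using assms(3)
proof (induction w rule: rev_induct)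
  case Nil
  show ?case by (rule exI[of _ "[]"], rule exI[of _ "[]"]) simp
next
  case (snoc c w)
  then obtain zs u where h: "\<forall>z\<in>set zs. goodz R S a z" "set u \<subseteq> S - {a}" "(w, Pw a zs @ u) \<in> teq R"
    by auto
  have cS: "c \<in> S" using snoc.prems by simp
  have wc: "(w@[c], Pw a zs @ u @ [c]) \<in> teq R" using teq_append[OF h(3) teq_refl[of "[c]"]] by simp
  show ?case
  proof (cases "c = a")
    case False
    then show ?thesis using h wc cS by (intro exI[of _ zs] exI[of _ "u@[c]"]) auto
  next
    case True
    obtain s t where st: "(u@[a], s@[a]@t) \<in> teq R" "tmax R (tr R s) \<subseteq> Lnb R S a"
      "set s \<subseteq> S - {a}" "set t \<subseteq> S - {a}" using split_aux[OF assms(1) refl h(2)] by blast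
    have "(Pw a zs @ u @ [c], Pw a zs @ (s@[a]@t) @ []) \<in> teq R"
      using teq_app[OF st(1), of "Pw a zs" "[]"] True by simp
    hence "(w@[c], Pw a (zs@[s]) @ t) \<in> teq R" using teq_trans[OF wc] by simp
    moreover have "\<forall>z\<in>set (zs@[s]). goodz R S a z" using h(1) st unfolding goodz_def by auto
    ultimately show ?thesis using st(4) by blast
  qed
qed

lemma list_choose: "\<forall>x\<in>set ps. \<exists>z. Q z \<and> x = f z \<Longrightarrow> \<exists>zs. ps = map f zs \<and> (\<forall>z\<in>set zs. Q z)"
proof (induction ps)
  case Nil then show ?case by simp
next
  case (Cons p ps)
  then obtain z zs where "Q z" "p = f z" "ps = map f zs" "\<forall>z\<in>set zs. Q z" by auto
  then show ?case by (intro exI[of _ "z#zs"]) auto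
qed

lemma decomp_the:
  assumes "sym R" "a \<in> S" "\<forall>z\<in>set zs. goodz R S a z" "set u \<subseteq> S - {a}"
  shows "pyr_decomp R S a (tr R (Pw a zs @ u)) = map (\<lambda>z. tr R (z@[a])) zs @ [tr R u]"
  unfolding pyr_decomp_def
proof (rule the_equality)
  let ?us = "map (\<lambda>z. tr R (z@[a])) zs @ [tr R u]"
  have "tprod R ?us = tprod R (map (tr R) (map (\<lambda>z. z@[a]) zs @ [u]))" by (simp add: comp_def)
  also have "\<dots> = tr R (Pw a zs @ u)" unfolding tprod_map_tr by (simp add: Pw_def)
  finally have 1: "tprod R ?us = tr R (Pw a zs @ u)" .
  have 2: "\<forall>i<length ?us - 1. ?us ! i \<in> Pyr R S a"
    using assms(3) by (auto simp: nth_append Pyr_iff)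
  show "?us \<noteq> [] \<and> tprod R ?us = tr R (Pw a zs @ u) \<and> (\<forall>i<length ?us - 1. ?us ! i \<in> Pyr R S a)
      \<and> last ?us \<in> tmon R (S - {a})" using 1 2 assms(4) by simp
next
  fix us assume h: "us \<noteq> [] \<and> tprod R us = tr R (Pw a zs @ u) \<and> (\<forall>i<length us - 1. us ! i \<in> Pyr R S a)
      \<and> last us \<in> tmon R (S - {a})"
  then obtain ps l where us: "us = ps @ [l]" by (metis rev_exhaust)
  have "\<forall>x\<in>set ps. x \<in> Pyr R S a"
  proof
    fix x assume "x \<in> set ps"
    then obtain i where "i < length ps" "x = ps ! i" by (metis in_set_conv_nth)
    thus "x \<in> Pyr R S a" using h us by (auto simp: nth_append)
  qed
  hence "\<forall>x\<in>set ps. \<exists>z. goodz R S a z \<and> x = (\<lambda>z. tr R (z@[a])) z" unfolding Pyr_iff by blast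
  then obtain zs' where zs': "ps = map (\<lambda>z. tr R (z@[a])) zs'" "\<forall>z\<in>set zs'. goodz R S a z"
    using list_choose[of ps "goodz R S a" "\<lambda>z. tr R (z@[a])"] by blast
  obtain u' where u': "set u' \<subseteq> S - {a}" "l = tr R u'" using h us unfolding tmon_iff by auto
  have "tprod R us = tprod R (map (tr R) (map (\<lambda>z. z@[a]) zs' @ [u']))" using us zs' u' by (simp add: comp_def)
  also have "\<dots> = tr R (Pw a zs' @ u')" unfolding tprod_map_tr by (simp add: Pw_def)
  finally have "tr R (Pw a zs @ u) = tr R (Pw a zs' @ u')" using h by simp
  hence "(Pw a zs @ u, Pw a zs' @ u') \<in> teq R" by (simp add: tr_eq_iff)
  from decomp_unique[OF assms(1,2,3) zs'(2) assms(4) u'(1) this]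
  have e: "map (tr R) zs = map (tr R) zs'" "tr R u = tr R u'" by auto
  have "map (\<lambda>z. tr R (z@[a])) zs = map (\<lambda>z. tr R (z@[a])) zs'"
  proof -
    have m: "map (\<lambda>z. tr R (z@[a])) xs = map (\<lambda>w. tconc R w (tr R [a])) (map (tr R) xs)" for xs
      by (induction xs) simp_all
    show ?thesis unfolding m e(1) ..
  qed
  then show "us = map (\<lambda>z. tr R (z@[a])) zs @ [tr R u]" using us zs' u' e by simp
qed



lemma has_sum_Sigma_nonneg:
  fixes f :: "'a \<times> 'b \<Rightarrow> real"
  assumes nn: "\<And>x y. x\<in>A \<Longrightarrow> y\<in>B x \<Longrightarrow> f (x,y) \<ge> 0"
  and sl: "\<And>x. x\<in>A \<Longrightarrow> ((\<lambda>y. f (x,y)) has_sum b x) (B x)"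
  and tot: "(b has_sum s) A"
  shows "(f has_sum s) (Sigma A B)"
proof -
  have bnn: "b x \<ge> 0" if "x \<in> A" for x using has_sum_nonneg[OF sl[OF that]] nn that by blast
  have bdd: "bdd_above (sum f ` {F. F \<subseteq> Sigma A B \<and> finite F})"
  proof (rule bdd_aboveI2)
    fix F assume "F \<in> {F. F \<subseteq> Sigma A B \<and> finite F}"
    hence F: "F \<subseteq> Sigma A B" "finite F" by auto
    define X where "X = fst ` F"
    define Y where "Y x = {y. (x,y) \<in> F}" for x
    have FX: "F = Sigma X Y" unfolding X_def Y_def by force
    have finX: "finite X" unfolding X_def using F by simp
    have finY: "finite (Y x)" for x
    proof -
      have "Y x \<subseteq> snd ` F" unfolding Y_def by force
      thus ?thesis using F(2) finite_subset by blast
    qed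
    have XA: "X \<subseteq> A" using F unfolding X_def by auto
    have YB: "Y x \<subseteq> B x" if "x \<in> X" for x using F that unfolding Y_def by auto
    have "sum f F = (\<Sum>x\<in>X. \<Sum>y\<in>Y x. f (x,y))" unfolding FX using finX finY by (simp add: sum.Sigma)
    also have "\<dots> \<le> (\<Sum>x\<in>X. b x)"
    proof (rule sum_mono)
      fix x assume x: "x \<in> X"
      show "(\<Sum>y\<in>Y x. f (x,y)) \<le> b x"
        by (rule finite_sum_le_has_sum[OF sl finY YB[OF x]]) (use x XA nn in auto)
    qed
    also have "\<dots> \<le> s" by (rule finite_sum_le_has_sum[OF tot finX XA]) (use bnn in auto)
    finally show "sum f F \<le> s" .
  qed
  have "f summable_on Sigma A B" by (rule nonneg_bdd_above_summable_on[OF _ bdd]) (use nn in auto)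
  then obtain s' where h: "(f has_sum s') (Sigma A B)" using summable_on_def by blast
  have "(b has_sum s') A" by (rule has_sum_Sigma[OF isUCont_plus h sl])
  hence "s' = s" using tot has_sum_unique by blast
  thus ?thesis using h by simp
qed

lemma has_sum_times_nonneg:
  fixes f g :: "_ \<Rightarrow> real"
  assumes "\<And>x. x \<in> A \<Longrightarrow> f x \<ge> 0" "\<And>y. y \<in> B \<Longrightarrow> g y \<ge> 0"
    "(f has_sum s) A" "(g has_sum t) B"
  shows "((\<lambda>(x,y). f x * g y) has_sum (s * t)) (A \<times> B)"
proof -
  have "((\<lambda>p. case p of (x,y) \<Rightarrow> f x * g y) has_sum (s*t)) (Sigma A (\<lambda>_. B))"
  proof (rule has_sum_Sigma_nonneg)
    show "\<And>x y. x\<in>A \<Longrightarrow> y\<in>B \<Longrightarrow> 0 \<le> (case (x,y) of (x,y) \<Rightarrow> f x * g y)" using assms by simp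
    show "((\<lambda>y. case (x,y) of (x,y) \<Rightarrow> f x * g y) has_sum (f x * t)) B" for x
      using has_sum_cmult_right[OF assms(4), of "f x"] by simp
    show "((\<lambda>x. f x * t) has_sum (s*t)) A" using has_sum_cmult_left[OF assms(3)] .
  qed
  thus ?thesis by simp
qed

definition Lk :: "nat \<Rightarrow> 'a set \<Rightarrow> 'a list set" where
  "Lk k A = {ws. length ws = k \<and> set ws \<subseteq> A}"

lemma Lk_Suc: "Lk (Suc k) A = (\<lambda>(x,ws). x#ws) ` (A \<times> Lk k A)"
  unfolding Lk_def by (auto simp: length_Suc_conv image_iff)

lemma has_sum_Lk:
  fixes f :: "_ \<Rightarrow> real"
  assumes "\<And>x. x \<in> A \<Longrightarrow> f x \<ge> 0" "(f has_sum s) A"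
  shows "((\<lambda>ws. prod_list (map f ws)) has_sum s ^ k) (Lk k A)"
proof (induction k)
  case 0
  have "Lk 0 A = {[]}" unfolding Lk_def by auto
  then show ?case using has_sum_finite[of "{[]}" "\<lambda>ws. prod_list (map f ws)"] by simp
next
  case (Suc k)
  have nn: "prod_list (map f ws) \<ge> 0" if "ws \<in> Lk k A" for ws
    using that assms(1) unfolding Lk_def by (intro prod_list_nonneg) auto
  have "((\<lambda>(x,ws). f x * prod_list (map f ws)) has_sum (s * s^k)) (A \<times> Lk k A)"
    by (rule has_sum_times_nonneg[OF assms(1) nn assms(2) Suc.IH])
  moreover have "inj_on (\<lambda>(x,ws). x#ws) (A \<times> Lk k A)" by (auto simp: inj_on_def)
  ultimately show ?case unfolding Lk_Suc
    by (subst has_sum_reindex) (auto simp: comp_def case_prod_unfold)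
qed



lemma interface:
  assumes "set ws \<subseteq> Mset R (S-{a}) (Lnb R S a)" "u \<in> tmon R (S-{a})"
  obtains zs u0 where "ws = map (tr R) zs" "\<forall>z\<in>set zs. goodz R S a z" "set u0 \<subseteq> S-{a}" "u = tr R u0"
proof -
  have "\<forall>x\<in>set ws. \<exists>z. goodz R S a z \<and> x = tr R z"
  proof
    fix x assume "x \<in> set ws"
    hence "x \<in> Mset R (S-{a}) (Lnb R S a)" using assms(1) by (rule subsetD[rotated])
    thus "\<exists>z. goodz R S a z \<and> x = tr R z" by (simp only: G_iff)
  qed
  from list_choose[of ws "goodz R S a" "tr R", OF this]
  obtain zs where zs: "ws = map (tr R) zs" "\<forall>z\<in>set zs. goodz R S a z" by (elim exE conjE)
  from assms(2) obtain u0 where u0: "set u0 \<subseteq> S-{a}" "u = tr R u0" unfolding tmon_iff by (elim exE conjE)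
  show ?thesis by (rule that[OF zs u0])
qed

lemma sum_list_Pw: "length (Pw a zs) = (\<Sum>z\<leftarrow>zs. length z + 1)"
  by (induction zs) auto

lemma Phi_props:
  assumes "sym R" "a \<in> S" "set ws \<subseteq> Mset R (S-{a}) (Lnb R S a)" "u \<in> tmon R (S-{a})"
  shows "Phi R a ws u \<in> tmon R S"
    "pyr_decomp R S a (Phi R a ws u) = map (\<lambda>w. tconc R w (tr R [a])) ws @ [u]"
    "tlen (Phi R a ws u) = (\<Sum>w\<leftarrow>ws. tlen w + 1) + tlen u"
    "tmax R (Phi R a ws u) \<subseteq> insert a (tmax R u)"
    "tmax R u \<subseteq> tmax R (Phi R a ws u)"
proof -
  obtain zs u0 where z: "ws = map (tr R) zs" "\<forall>z\<in>set zs. goodz R S a z" "set u0 \<subseteq> S-{a}" "u = tr R u0"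
    using interface[OF assms(3,4)] by blast
  have P: "Phi R a ws u = tr R (Pw a zs @ u0)" using z Phi_tr by simp
  note pp = pw_props[OF assms(1,2) z(2)]
  show "Phi R a ws u \<in> tmon R S" unfolding P using pp z(3) by auto
  have m: "map (\<lambda>w. tconc R w (tr R [a])) (map (tr R) xs) = map (\<lambda>z. tr R (z@[a])) xs" for xs
    by (induction xs) simp_all
  have "pyr_decomp R S a (Phi R a ws u) = pyr_decomp R S a (tr R (Pw a zs @ u0))" using P by simp
  also have "\<dots> = map (\<lambda>z. tr R (z@[a])) zs @ [tr R u0]" by (rule decomp_the[OF assms(1,2) z(2,3)])
  finally show "pyr_decomp R S a (Phi R a ws u) = map (\<lambda>w. tconc R w (tr R [a])) ws @ [u]"
    unfolding z(1) m z(4) .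
  have s: "(\<Sum>w\<leftarrow>map (tr R) xs. tlen w + 1) = (\<Sum>z\<leftarrow>xs. length z + 1)" for xs
    by (induction xs) simp_all
  have "tlen (Phi R a ws u) = length (Pw a zs @ u0)" using P by simp
  also have "\<dots> = (\<Sum>w\<leftarrow>ws. tlen w + 1) + tlen u" unfolding z(1) z(4) s by (simp add: sum_list_Pw)
  finally show "tlen (Phi R a ws u) = (\<Sum>w\<leftarrow>ws. tlen w + 1) + tlen u" .
  have TP: "tmax R (Phi R a ws u) = tmax R (tr R (Pw a zs @ u0))" using P by simp
  show "tmax R (Phi R a ws u) \<subseteq> insert a (tmax R u)"
    unfolding TP unfolding z(4) using tmax_app_sub[OF assms(1), of "Pw a zs" u0] pp by blast
  show "tmax R u \<subseteq> tmax R (Phi R a ws u)"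
    unfolding TP unfolding z(4) by (rule subsetI, rule tmax_app_right)
qed

lemma Pt_inj:
  assumes "sym R"
  shows "inj_on (\<lambda>w. tconc R w (tr R [a])) (range (tr R))"
proof (rule inj_onI)
  fix x y assume "x \<in> range (tr R)" "y \<in> range (tr R)" and e: "tconc R x (tr R [a]) = tconc R y (tr R [a])"
  then obtain u v where uv: "x = tr R u" "y = tr R v" by blast
  have "(u@[a], v@[a]) \<in> teq R" using e unfolding uv by (simp add: tr_eq_iff)
  thus "x = y" unfolding uv using teq_cancel1[OF assms] tr_eqI by blast
qed

lemma Mset_range: "Mset R S T \<subseteq> range (tr R)"
proof
  fix x assume "x \<in> Mset R S T"
  then obtain w where "x = tr R w" unfolding Mset_iff by (elim exE conjE)
  thus "x \<in> range (tr R)" by simp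
qed

lemma tmon_range: "tmon R S \<subseteq> range (tr R)"
  unfolding tmon_def by (rule image_mono) simp

lemma Phi_inj:
  assumes "sym R" "a \<in> S" "set ws \<subseteq> Mset R (S-{a}) (Lnb R S a)" "u \<in> tmon R (S-{a})"
    "set ws' \<subseteq> Mset R (S-{a}) (Lnb R S a)" "u' \<in> tmon R (S-{a})" "Phi R a ws u = Phi R a ws' u'"
  shows "ws = ws' \<and> u = u'"
proof -
  have "map (\<lambda>w. tconc R w (tr R [a])) ws @ [u] = map (\<lambda>w. tconc R w (tr R [a])) ws' @ [u']"
    using Phi_props(2)[OF assms(1-4)] Phi_props(2)[OF assms(1,2,5,6)] assms(7) by simp
  hence e: "map (\<lambda>w. tconc R w (tr R [a])) ws = map (\<lambda>w. tconc R w (tr R [a])) ws'" "u = u'" by auto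
  have "inj_on (\<lambda>w. tconc R w (tr R [a])) (set ws \<union> set ws')"
  proof (rule inj_on_subset[OF Pt_inj[OF assms(1)]])
    show "set ws \<union> set ws' \<subseteq> range (tr R)" using Mset_range[of R "S-{a}" "Lnb R S a"] assms(3,5) by blast
  qed
  thus ?thesis using e inj_on_map_eq_map by blast
qed

lemma Phi_surj:
  assumes "sym R" "a \<in> S" "x \<in> tmon R S"
  shows "\<exists>ws u. set ws \<subseteq> Mset R (S-{a}) (Lnb R S a) \<and> u \<in> tmon R (S-{a}) \<and> x = Phi R a ws u"
proof -
  from assms(3) obtain w where w: "set w \<subseteq> S" "x = tr R w" unfolding tmon_iff by (elim exE conjE)
  from decomp_exists[OF assms(1,2) w(1)] obtain zs u where
    h: "\<forall>z\<in>set zs. goodz R S a z" "set u \<subseteq> S - {a}" "(w, Pw a zs @ u) \<in> teq R"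
    by (elim exE conjE)
  have "x = tr R (Pw a zs @ u)" unfolding w(2) by (rule tr_eqI[OF h(3)])
  hence 1: "x = Phi R a (map (tr R) zs) (tr R u)" by (simp add: Phi_tr)
  have 2: "set (map (tr R) zs) \<subseteq> Mset R (S-{a}) (Lnb R S a)"
  proof
    fix x assume "x \<in> set (map (tr R) zs)"
    then obtain z where "z \<in> set zs" "x = tr R z" by auto
    hence "goodz R S a z \<and> x = tr R z" using h(1) by blast
    thus "x \<in> Mset R (S-{a}) (Lnb R S a)" unfolding G_iff by (rule exI)
  qed
  have 3: "tr R u \<in> tmon R (S-{a})" using h(2) by simp
  show ?thesis using 1 2 3 by blast
qed

lemma pow_sum_list: "(p::real) ^ (\<Sum>w\<leftarrow>ws. h w + 1) = prod_list (map (\<lambda>w. p * p ^ h w) ws)"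
  by (induction ws) (simp_all add: power_add)

lemma decomp_slice:
  assumes "sym R" "a \<in> S" "a \<in> T" "0 \<le> (p::real)"
    "((\<lambda>x. p ^ tlen x) has_sum zG) (Mset R (S-{a}) (Lnb R S a))"
    "((\<lambda>x. p ^ tlen x) has_sum zH) (Mset R (S-{a}) T)"
  shows "((\<lambda>(ws,u). p ^ tlen (Phi R a ws u)) has_sum ((p*zG)^k * zH))
      (Lk k (Mset R (S-{a}) (Lnb R S a)) \<times> Mset R (S-{a}) T)"
proof -
  let ?G = "Mset R (S-{a}) (Lnb R S a)" and ?H = "Mset R (S-{a}) T"
  have Hm: "?H \<subseteq> tmon R (S-{a})" unfolding Mset_def by auto
  have hs: "((\<lambda>(ws,u). prod_list (map (\<lambda>w. p * p ^ tlen w) ws) * p ^ tlen u) has_sum ((p*zG)^k * zH))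
      (Lk k ?G \<times> ?H)"
  proof (rule has_sum_times_nonneg)
    show "\<And>x. x \<in> Lk k ?G \<Longrightarrow> 0 \<le> prod_list (map (\<lambda>w. p * p ^ tlen w) x)"
      using assms(4) by (intro prod_list_nonneg) auto
    show "\<And>y. y \<in> ?H \<Longrightarrow> 0 \<le> p ^ tlen y" using assms(4) by simp
    show "((\<lambda>ws. prod_list (map (\<lambda>w. p * p ^ tlen w) ws)) has_sum (p*zG)^k) (Lk k ?G)"
      by (rule has_sum_Lk) (use assms(4) has_sum_cmult_right[OF assms(5), of p] in auto)
    show "((\<lambda>x. p ^ tlen x) has_sum zH) ?H" by (rule assms(6))
  qed
  have W: "p ^ tlen (Phi R a ws u) = prod_list (map (\<lambda>w. p * p ^ tlen w) ws) * p ^ tlen u"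
    if "(ws,u) \<in> Lk k ?G \<times> ?H" for ws u
  proof -
    have "set ws \<subseteq> ?G" "u \<in> tmon R (S-{a})" using that Hm unfolding Lk_def by auto
    hence "tlen (Phi R a ws u) = (\<Sum>w\<leftarrow>ws. tlen w + 1) + tlen u" by (rule Phi_props(3)[OF assms(1,2)])
    thus ?thesis by (simp only: power_add pow_sum_list)
  qed
  have eqf: "(\<lambda>(ws,u). p ^ tlen (Phi R a ws u)) x = (\<lambda>(ws,u). prod_list (map (\<lambda>w. p * p ^ tlen w) ws) * p ^ tlen u) x"
    if "x \<in> Lk k ?G \<times> ?H" for x
    using W[of "fst x" "snd x"] that by (simp add: case_prod_unfold)
  show ?thesis by (rule has_sum_cong[THEN iffD2, OF eqf hs])
qed

lemma decomp_sum_k: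
  assumes "sym R" "a \<in> S" "a \<in> T" "0 \<le> (p::real)"
    "((\<lambda>x. p ^ tlen x) has_sum zG) (Mset R (S-{a}) (Lnb R S a))"
    "((\<lambda>x. p ^ tlen x) has_sum zH) (Mset R (S-{a}) T)"
  shows "((\<lambda>x. p ^ tlen x) has_sum ((p*zG)^k * zH))
     {x \<in> Mset R S T. length (pyr_decomp R S a x) - 1 = k}"
proof -
  let ?G = "Mset R (S-{a}) (Lnb R S a)" and ?H = "Mset R (S-{a}) T"
  have Hm: "?H \<subseteq> tmon R (S-{a})" unfolding Mset_def by auto
  have eq: "{x \<in> Mset R S T. length (pyr_decomp R S a x) - 1 = k} = (\<lambda>(ws,u). Phi R a ws u) ` (Lk k ?G \<times> ?H)"
  proof (intro set_eqI iffI)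
    fix x assume x: "x \<in> {x \<in> Mset R S T. length (pyr_decomp R S a x) - 1 = k}"
    then obtain ws u where wu: "set ws \<subseteq> ?G" "u \<in> tmon R (S-{a})" "x = Phi R a ws u"
      using Phi_surj[OF assms(1,2)] unfolding Mset_def by blast
    note pr = Phi_props[OF assms(1,2) wu(1,2)]
    have "length ws = k" using x pr(2) wu(3) by simp
    moreover have "u \<in> ?H" using x pr(5) wu unfolding Mset_def by auto
    ultimately show "x \<in> (\<lambda>(ws,u). Phi R a ws u) ` (Lk k ?G \<times> ?H)"
      using wu unfolding Lk_def by auto
  next
    fix x assume "x \<in> (\<lambda>(ws,u). Phi R a ws u) ` (Lk k ?G \<times> ?H)"
    then obtain ws u where wu: "set ws \<subseteq> ?G" "length ws = k" "u \<in> ?H" "x = Phi R a ws u"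
      unfolding Lk_def by auto
    have u: "u \<in> tmon R (S-{a})" "tmax R u \<subseteq> T" using wu(3) unfolding Mset_def by auto
    note pr = Phi_props[OF assms(1,2) wu(1) u(1)]
    show "x \<in> {x \<in> Mset R S T. length (pyr_decomp R S a x) - 1 = k}"
      using pr(1,2,4) u(2) assms(3) wu(2,4) unfolding Mset_def by auto
  qed
  have inj: "inj_on (\<lambda>(ws,u). Phi R a ws u) (Lk k ?G \<times> ?H)"
  proof (rule inj_onI)
    fix x y assume x: "x \<in> Lk k ?G \<times> ?H" and y: "y \<in> Lk k ?G \<times> ?H"
      and e: "(\<lambda>(ws,u). Phi R a ws u) x = (\<lambda>(ws,u). Phi R a ws u) y"
    obtain ws u where xx: "x = (ws,u)" by (metis prod.collapse)
    obtain ws' u' where yy: "y = (ws',u')" by (metis prod.collapse)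
    have h: "set ws \<subseteq> ?G" "u \<in> tmon R (S-{a})" "set ws' \<subseteq> ?G" "u' \<in> tmon R (S-{a})"
      using x y Hm unfolding xx yy Lk_def by auto
    show "x = y" using Phi_inj[OF assms(1,2) h] e unfolding xx yy by simp
  qed
  show ?thesis unfolding eq
    using decomp_slice[OF assms] inj by (subst has_sum_reindex) (auto simp: comp_def case_prod_unfold)
qed

lemma decomp_sum:
  assumes "sym R" "a \<in> S" "a \<in> T" "0 \<le> (p::real)"
    "((\<lambda>x. p ^ tlen x) has_sum zG) (Mset R (S-{a}) (Lnb R S a))"
    "((\<lambda>x. p ^ tlen x) has_sum zH) (Mset R (S-{a}) T)"
    "p * zG < 1"
  shows "((\<lambda>x. p ^ tlen x) has_sum (zH / (1 - p*zG))) (Mset R S T)"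
proof -
  let ?G = "Mset R (S-{a}) (Lnb R S a)" and ?H = "Mset R (S-{a}) T"
  have Hm: "?H \<subseteq> tmon R (S-{a})" unfolding Mset_def by auto
  have zG: "zG \<ge> 0" using has_sum_nonneg[OF assms(5)] assms(4) by simp
  have zH: "zH \<ge> 0" using has_sum_nonneg[OF assms(6)] assms(4) by simp
  have geo: "((\<lambda>k. (p*zG)^k * zH) has_sum (zH / (1 - p*zG))) UNIV"
  proof (rule sums_nonneg_imp_has_sum)
    have "(\<lambda>k. (p*zG)^k) sums (1 / (1 - p*zG))" by (rule geometric_sums) (use zG assms(4,7) in auto)
    from sums_mult2[OF this, of zH] show "(\<lambda>k. (p*zG)^k * zH) sums (zH / (1 - p*zG))" by simp
    show "\<And>n. 0 \<le> (p*zG)^n * zH" using zG zH assms(4) by simp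
  qed
  have "((\<lambda>(k,wu). p ^ tlen (Phi R a (fst wu) (snd wu))) has_sum (zH / (1 - p*zG)))
      (Sigma UNIV (\<lambda>k. Lk k ?G \<times> ?H))"
  proof (rule has_sum_Sigma_nonneg[OF _ _ geo])
    show "\<And>x y. 0 \<le> (case (x,y) of (k,wu) \<Rightarrow> p ^ tlen (Phi R a (fst wu) (snd wu)))" using assms(4) by simp
    fix k
    show "((\<lambda>y. case (k,y) of (k,wu) \<Rightarrow> p ^ tlen (Phi R a (fst wu) (snd wu))) has_sum ((p*zG)^k * zH))
      (Lk k ?G \<times> ?H)" using decomp_slice[OF assms(1-6), of k] by (simp add: case_prod_unfold)
  qed
  moreover have eq: "Mset R S T = (\<lambda>(k,wu). Phi R a (fst wu) (snd wu)) ` (Sigma UNIV (\<lambda>k. Lk k ?G \<times> ?H))"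
  proof (intro set_eqI iffI)
    fix x assume x: "x \<in> Mset R S T"
    then obtain ws u where wu: "set ws \<subseteq> ?G" "u \<in> tmon R (S-{a})" "x = Phi R a ws u"
      using Phi_surj[OF assms(1,2)] unfolding Mset_def by blast
    note pr = Phi_props[OF assms(1,2) wu(1,2)]
    have "u \<in> ?H" using x pr(5) wu unfolding Mset_def by auto
    hence "(length ws, (ws,u)) \<in> Sigma UNIV (\<lambda>k. Lk k ?G \<times> ?H)" using wu unfolding Lk_def by auto
    thus "x \<in> (\<lambda>(k,wu). Phi R a (fst wu) (snd wu)) ` (Sigma UNIV (\<lambda>k. Lk k ?G \<times> ?H))"
      using wu(3) by force
  next
    fix x assume "x \<in> (\<lambda>(k,wu). Phi R a (fst wu) (snd wu)) ` (Sigma UNIV (\<lambda>k. Lk k ?G \<times> ?H))"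
    then obtain ws u where wu: "set ws \<subseteq> ?G" "u \<in> ?H" "x = Phi R a ws u"
      unfolding Lk_def by auto
    have u: "u \<in> tmon R (S-{a})" "tmax R u \<subseteq> T" using wu(2) unfolding Mset_def by auto
    note pr = Phi_props[OF assms(1,2) wu(1) u(1)]
    show "x \<in> Mset R S T" using pr(1,4) u(2) assms(3) wu(3) unfolding Mset_def by auto
  qed
  moreover have inj: "inj_on (\<lambda>(k,wu). Phi R a (fst wu) (snd wu)) (Sigma UNIV (\<lambda>k. Lk k ?G \<times> ?H))"
  proof (rule inj_onI)
    fix x y assume x: "x \<in> Sigma UNIV (\<lambda>k. Lk k ?G \<times> ?H)" and y: "y \<in> Sigma UNIV (\<lambda>k. Lk k ?G \<times> ?H)"
      and e: "(\<lambda>(k,wu). Phi R a (fst wu) (snd wu)) x = (\<lambda>(k,wu). Phi R a (fst wu) (snd wu)) y"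
    obtain k ws u where xx: "x = (k,(ws,u))" by (metis prod.collapse)
    obtain k' ws' u' where yy: "y = (k',(ws',u'))" by (metis prod.collapse)
    have h: "set ws \<subseteq> ?G" "length ws = k" "u \<in> tmon R (S-{a})" "set ws' \<subseteq> ?G" "length ws' = k'" "u' \<in> tmon R (S-{a})"
      using x y Hm unfolding xx yy Lk_def by auto
    have "ws = ws' \<and> u = u'" using Phi_inj[OF assms(1,2) h(1,3,4,6)] e unfolding xx yy by simp
    thus "x = y" using h(2,5) xx yy by simp
  qed
  ultimately show ?thesis by (simp add: has_sum_reindex comp_def case_prod_unfold)
qed



lemma cliques_sub: "cliques R U \<subseteq> Pow U" unfolding cliques_def by auto

lemma finite_cliques: "finite U \<Longrightarrow> finite (cliques R U)"
  using cliques_sub finite_Pow_iff finite_subset by metis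

lemma cliques_split:
  assumes "sym R" "a \<in> U" "(a,a) \<in> R"
  shows "cliques R U = cliques R (U - {a}) \<union> insert a ` cliques R (U - {b. (a,b) \<in> R})"
proof (intro set_eqI iffI)
  fix g assume g: "g \<in> cliques R U"
  show "g \<in> cliques R (U - {a}) \<union> insert a ` cliques R (U - {b. (a,b) \<in> R})"
  proof (cases "a \<in> g")
    case False then show ?thesis using g unfolding cliques_def by auto
  next
    case True
    have "g - {a} \<in> cliques R (U - {b. (a,b) \<in> R})" using g True unfolding cliques_def by auto
    moreover have "g = insert a (g - {a})" using True by auto
    ultimately show ?thesis by blast
  qed
next
  fix g assume "g \<in> cliques R (U - {a}) \<union> insert a ` cliques R (U - {b. (a,b) \<in> R})"
  then show "g \<in> cliques R U"
  proof
    assume "g \<in> cliques R (U - {a})" then show ?thesis unfolding cliques_def by auto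
  next
    assume "g \<in> insert a ` cliques R (U - {b. (a,b) \<in> R})"
    then obtain d where d: "d \<in> cliques R (U - {b. (a,b) \<in> R})" "g = insert a d" by blast
    have "\<forall>b\<in>d. (a,b) \<notin> R \<and> (b,a) \<notin> R" using d(1) assms(1) unfolding cliques_def sym_def by blast
    then show ?thesis using d assms(2) unfolding cliques_def by auto
  qed
qed

lemma mu_split:
  fixes X :: "'b::comm_ring_1"
  assumes "sym R" "finite U" "a \<in> U" "(a,a) \<in> R"
  shows "mu R U X = mu R (U - {a}) X - X * mu R (U - {b. (a,b) \<in> R}) X"
proof -
  let ?C1 = "cliques R (U - {a})" and ?C2 = "cliques R (U - {b. (a,b) \<in> R})"
  have f1: "finite ?C1" by (rule finite_cliques) (use assms(2) in simp)
  have f2: "finite ?C2" by (rule finite_cliques) (use assms(2) in simp)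
  have disj: "?C1 \<inter> insert a ` ?C2 = {}" unfolding cliques_def by auto
  have inj: "inj_on (insert a) ?C2"
  proof (rule inj_onI)
    fix x y assume "x \<in> ?C2" "y \<in> ?C2" "insert a x = insert a y"
    moreover have "a \<notin> x" "a \<notin> y" using calculation(1,2) assms(4) unfolding cliques_def by auto
    ultimately show "x = y" by (metis insert_ident)
  qed
  have fin: "finite g" if "g \<in> ?C2" for g using that assms(2) unfolding cliques_def by (auto intro: finite_subset)
  have na: "a \<notin> g" if "g \<in> ?C2" for g using that assms(4) unfolding cliques_def by auto
  have "mu R U X = (\<Sum>g\<in>?C1. (-1) ^ card g * X ^ card g) + (\<Sum>g\<in>insert a ` ?C2. (-1) ^ card g * X ^ card g)"
    unfolding mu_def cliques_split[OF assms(1,3,4)] using f1 f2 disj by (simp add: sum.union_disjoint)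
  also have "(\<Sum>g\<in>insert a ` ?C2. (-1) ^ card g * X ^ card g) = (\<Sum>g\<in>?C2. (-1) ^ card (insert a g) * X ^ card (insert a g))"
    using inj by (simp add: sum.reindex)
  also have "\<dots> = (\<Sum>g\<in>?C2. - X * ((-1) ^ card g * X ^ card g))"
    by (rule sum.cong) (simp_all add: fin na)
  also have "\<dots> = - X * mu R (U - {b. (a,b) \<in> R}) X" unfolding mu_def by (simp add: sum_distrib_left)
  finally show ?thesis unfolding mu_def by simp
qed

lemma mu_empty[simp]: "mu R {} X = 1"
proof -
  have "cliques R {} = {{}}" unfolding cliques_def by auto
  thus ?thesis unfolding mu_def by simp
qed

lemma mu_zero:
  assumes "finite S"
  shows "mu R S (0::'b::comm_ring_1) = 1"
proof -
  have "mu R S (0::'b) = (\<Sum>g\<in>cliques R S. if g = {} then 1 else 0)"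
    unfolding mu_def
  proof (rule sum.cong)
    fix g assume "g \<in> cliques R S"
    hence "finite g" using assms unfolding cliques_def by (auto intro: finite_subset)
    thus "(-1) ^ card g * (0::'b) ^ card g = (if g = {} then 1 else 0)" by (simp add: power_0_left)
  qed simp
  also have "\<dots> = 1" using finite_cliques[OF assms] by (simp add: cliques_def)
  finally show ?thesis .
qed

lemma Mset_empty: "Mset R {} T = {tr R []}"
proof (intro set_eqI iffI)
  fix x assume "x \<in> Mset R {} T"
  then obtain w where "set w \<subseteq> {}" "x = tr R w" unfolding Mset_iff by (elim exE conjE)
  thus "x \<in> {tr R []}" by simp
next
  fix x assume "x \<in> {tr R []}"
  hence "set [] \<subseteq> {} \<and> tmax R (tr R []) \<subseteq> T \<and> x = tr R []" by simp
  thus "x \<in> Mset R {} T" unfolding Mset_iff by (rule exI)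
qed

lemma Mset_rec:
  assumes "sym R" "a \<in> S" "(a,a) \<in> R" "a \<notin> T"
  shows "Mset R S (insert a T) = Mset R S T \<union> (\<lambda>y. tconc R y (tr R [a])) ` Mset R S (T \<union> Lnb R S a)"
    "Mset R S T \<inter> (\<lambda>y. tconc R y (tr R [a])) ` Mset R S (T \<union> Lnb R S a) = {}"
proof -
  show "Mset R S (insert a T) = Mset R S T \<union> (\<lambda>y. tconc R y (tr R [a])) ` Mset R S (T \<union> Lnb R S a)"
  proof (intro set_eqI iffI)
    fix x assume "x \<in> Mset R S (insert a T)"
    then obtain w where w: "set w \<subseteq> S" "tmax R (tr R w) \<subseteq> insert a T" "x = tr R w"
      unfolding Mset_iff by (elim exE conjE)
    show "x \<in> Mset R S T \<union> (\<lambda>y. tconc R y (tr R [a])) ` Mset R S (T \<union> Lnb R S a)"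
    proof (cases "a \<in> tmax R (tr R w)")
      case False
      hence "set w \<subseteq> S \<and> tmax R (tr R w) \<subseteq> T \<and> x = tr R w" using w by auto
      hence "x \<in> Mset R S T" unfolding Mset_iff by (rule exI)
      thus ?thesis by (rule UnI1)
    next
      case True
      then obtain y where y: "(w, y@[a]) \<in> teq R" unfolding tmax_tr by blast
      have xy: "x = tconc R (tr R y) (tr R [a])" using w(3) tr_eqI[OF y] by simp
      have sy: "set y \<subseteq> S" using teq_set[OF y] w(1) by auto
      have my: "tmax R (tr R y) \<subseteq> T \<union> Lnb R S a"
      proof
        fix b assume b: "b \<in> tmax R (tr R y)"
        show "b \<in> T \<union> Lnb R S a"
        proof (cases "(a,b) \<in> R")
          case True
          have "b \<in> S" using b tmax_subset sy by fastforce
          thus ?thesis using True unfolding Lnb_def by simp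
        next
          case False
          hence "b \<in> tmax R (tr R (y@[a]))" using b tmax_snoc[OF assms(1)] by simp
          hence "b \<in> insert a T" using w(2) tr_eqI[OF y] by auto
          moreover have "b \<noteq> a" using False assms(3) by auto
          ultimately show ?thesis by simp
        qed
      qed
      have "set y \<subseteq> S \<and> tmax R (tr R y) \<subseteq> T \<union> Lnb R S a \<and> tr R y = tr R y" using sy my by simp
      hence "tr R y \<in> Mset R S (T \<union> Lnb R S a)" unfolding Mset_iff by (rule exI)
      thus ?thesis using xy by blast
    qed
  next
    fix x assume "x \<in> Mset R S T \<union> (\<lambda>y. tconc R y (tr R [a])) ` Mset R S (T \<union> Lnb R S a)"
    then show "x \<in> Mset R S (insert a T)"
    proof
      assume "x \<in> Mset R S T" thus ?thesis unfolding Mset_def by auto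
    next
      assume "x \<in> (\<lambda>y. tconc R y (tr R [a])) ` Mset R S (T \<union> Lnb R S a)"
      then obtain y0 where y0: "y0 \<in> Mset R S (T \<union> Lnb R S a)" "x = tconc R y0 (tr R [a])" by blast
      then obtain y where y: "set y \<subseteq> S" "tmax R (tr R y) \<subseteq> T \<union> Lnb R S a" "y0 = tr R y"
        unfolding Mset_iff by (elim exE conjE)
      have x: "x = tr R (y@[a])" using y0(2) y(3) by simp
      have "tmax R (tr R (y@[a])) \<subseteq> insert a T"
        unfolding tmax_snoc[OF assms(1)] using y(2) unfolding Lnb_def by auto
      hence "set (y@[a]) \<subseteq> S \<and> tmax R (tr R (y@[a])) \<subseteq> insert a T \<and> x = tr R (y@[a])"
        using y(1) assms(2) x by simp
      thus ?thesis unfolding Mset_iff by (rule exI)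
    qed
  qed
  show "Mset R S T \<inter> (\<lambda>y. tconc R y (tr R [a])) ` Mset R S (T \<union> Lnb R S a) = {}"
  proof (rule ccontr)
    assume "Mset R S T \<inter> (\<lambda>y. tconc R y (tr R [a])) ` Mset R S (T \<union> Lnb R S a) \<noteq> {}"
    then obtain x y0 where x: "x \<in> Mset R S T" "y0 \<in> Mset R S (T \<union> Lnb R S a)" "x = tconc R y0 (tr R [a])"
      by blast
    obtain y where "y0 = tr R y" using x(2) unfolding Mset_iff by (elim exE conjE)
    hence "a \<in> tmax R x" using x(3) tmax_snoc[OF assms(1), of y a] by simp
    thus False using x(1) assms(4) unfolding Mset_def by auto
  qed
qed



theorem Zthm:
  fixes p :: real
  assumes "sym R" "finite S" "\<forall>a\<in>S. (a,a) \<in> R" "0 \<le> p" "\<forall>S'\<subseteq>S. mu R S' p > 0"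
  shows "((\<lambda>x. p ^ tlen x) has_sum (mu R (S - T) p / mu R S p)) (Mset R S T)"
  using assms(2,3,5)
proof (induction S arbitrary: T rule: finite_induct)
  case empty
  have "((\<lambda>x. p ^ tlen x) has_sum (\<Sum>x\<in>{tr R []}. p ^ tlen x)) {tr R []}" by (rule has_sum_finite) simp
  then show ?case by (simp add: Mset_empty)
next
  case (insert a F)
  let ?S = "insert a F"
  let ?L = "Lnb R ?S a"
  have aS: "a \<in> ?S" by simp
  have aa: "(a,a) \<in> R" using insert.prems(1) by simp
  have SF: "?S - {a} = F" using insert.hyps(2) by auto
  have IH: "((\<lambda>x. p ^ tlen x) has_sum (mu R (F - T') p / mu R F p)) (Mset R F T')" for T'
    using insert.IH[of T'] insert.prems by auto
  have SL: "?S - {b. (a,b) \<in> R} = F - ?L" using aa insert.hyps(2) unfolding Lnb_def by auto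
  have muS: "mu R ?S p = mu R F p - p * mu R (F - ?L) p"
    using mu_split[OF assms(1) _ aS aa, of p] insert.hyps(1) SF SL by simp
  have posS: "mu R ?S p > 0" and posF: "mu R F p > 0" using insert.prems(2) by auto
  have caseA: "((\<lambda>x. p ^ tlen x) has_sum (mu R (?S - T') p / mu R ?S p)) (Mset R ?S T')" if aT: "a \<in> T'" for T'
  proof -
    let ?zG = "mu R (F - ?L) p / mu R F p" and ?zH = "mu R (F - T') p / mu R F p"
    have G: "((\<lambda>x. p ^ tlen x) has_sum ?zG) (Mset R (?S-{a}) ?L)" unfolding SF by (rule IH)
    have H: "((\<lambda>x. p ^ tlen x) has_sum ?zH) (Mset R (?S-{a}) T')" unfolding SF by (rule IH)
    have lt: "p * ?zG < 1" using posS posF muS by (simp add: field_simps)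
    have "((\<lambda>x. p ^ tlen x) has_sum (?zH / (1 - p * ?zG))) (Mset R ?S T')"
      by (rule decomp_sum[OF assms(1) aS aT assms(4) G H lt])
    moreover have "?zH / (1 - p * ?zG) = mu R (?S - T') p / mu R ?S p"
    proof -
      have st: "?S - T' = F - T'" using aT by auto
      have e: "1 - p * ?zG = mu R ?S p / mu R F p" using muS posF by (simp add: field_simps)
      have nz: "mu R F p \<noteq> 0" "mu R ?S p \<noteq> 0" using posF posS by auto
      have "?zH / (1 - p * ?zG) = (mu R (F - T') p / mu R F p) / (mu R ?S p / mu R F p)" by (simp only: e)
      also have "\<dots> = mu R (F - T') p / mu R ?S p" using nz by simp
      finally show ?thesis unfolding st .
    qed
    ultimately show ?thesis by simp
  qed
  show ?case
  proof (cases "a \<in> T")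
    case True then show ?thesis by (rule caseA)
  next
    case False
    note rec = Mset_rec[OF assms(1) aS aa False]
    have A1: "((\<lambda>x. p ^ tlen x) has_sum (mu R (?S - insert a T) p / mu R ?S p)) (Mset R ?S (insert a T))"
      by (rule caseA) simp
    have aL: "a \<in> T \<union> ?L" using aa unfolding Lnb_def by simp
    have A2: "((\<lambda>x. p ^ tlen x) has_sum (mu R (?S - (T \<union> ?L)) p / mu R ?S p)) (Mset R ?S (T \<union> ?L))"
      by (rule caseA[OF aL])
    have inj: "inj_on (\<lambda>y. tconc R y (tr R [a])) (Mset R ?S (T \<union> ?L))"
      using inj_on_subset[OF Pt_inj[OF assms(1)] Mset_range] .
    have A2c: "((\<lambda>y. p * p ^ tlen y) has_sum (p * (mu R (?S - (T \<union> ?L)) p / mu R ?S p))) (Mset R ?S (T \<union> ?L))"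
      by (rule has_sum_cmult_right[OF A2])
    have pw: "p * p ^ tlen y = ((\<lambda>x. p ^ tlen x) \<circ> (\<lambda>y. tconc R y (tr R [a]))) y"
      if "y \<in> Mset R ?S (T \<union> ?L)" for y
    proof -
      have "y \<in> range (tr R)" using Mset_range that by (rule subsetD)
      then obtain w where "y = tr R w" by (elim rangeE)
      thus ?thesis by simp
    qed
    have "(((\<lambda>x. p ^ tlen x) \<circ> (\<lambda>y. tconc R y (tr R [a]))) has_sum (p * (mu R (?S - (T \<union> ?L)) p / mu R ?S p))) (Mset R ?S (T \<union> ?L))"
      by (rule has_sum_cong[THEN iffD1, OF pw A2c])
    hence A2': "((\<lambda>x. p ^ tlen x) has_sum (p * (mu R (?S - (T \<union> ?L)) p / mu R ?S p)))
        ((\<lambda>y. tconc R y (tr R [a])) ` Mset R ?S (T \<union> ?L))"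
      by (rule has_sum_reindex[OF inj, THEN iffD2])
    have sub: "(\<lambda>y. tconc R y (tr R [a])) ` Mset R ?S (T \<union> ?L) \<subseteq> Mset R ?S (insert a T)"
      unfolding rec(1) by (rule Un_upper2)
    have dj: "X \<inter> Y = {} \<Longrightarrow> X = (X \<union> Y) - Y" for X Y :: "'a list set set" by blast
    have eqT: "Mset R ?S T = Mset R ?S (insert a T) - (\<lambda>y. tconc R y (tr R [a])) ` Mset R ?S (T \<union> ?L)"
      unfolding rec(1) by (rule dj[OF rec(2)])
    have D: "((\<lambda>x. p ^ tlen x) has_sum (mu R (?S - insert a T) p / mu R ?S p - p * (mu R (?S - (T \<union> ?L)) p / mu R ?S p)))
       (Mset R ?S T)" unfolding eqT by (rule has_sum_Diff[OF A1 A2' sub])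
    have fin: "finite (?S - T)" using insert.hyps(1) by simp
    have aST: "a \<in> ?S - T" using False by simp
    have e1: "?S - T - {a} = ?S - insert a T" by auto
    have e2: "?S - T - {b. (a,b) \<in> R} = ?S - (T \<union> ?L)" unfolding Lnb_def by auto
    have "mu R (?S - T) p = mu R (?S - insert a T) p - p * mu R (?S - (T \<union> ?L)) p"
      using mu_split[OF assms(1) fin aST aa, of p] e1 e2 by simp
    hence "mu R (?S - insert a T) p / mu R ?S p - p * (mu R (?S - (T \<union> ?L)) p / mu R ?S p)
        = mu R (?S - T) p / mu R ?S p" using posS by (simp add: field_simps)
    thus ?thesis using D by simp
  qed
qed

lemma mu_cont: "continuous_on UNIV (\<lambda>q::real. mu R S q)"
  unfolding mu_def by (intro continuous_intros)

lemma mu_tendsto: "((\<lambda>q::real. mu R S q) \<longlongrightarrow> mu R S q0) (at q0 within X)"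
  unfolding mu_def by (intro tendsto_intros)

lemma mu_of_real: "mu R S (complex_of_real q) = complex_of_real (mu R S q)"
  unfolding mu_def by simp

lemma Mset_mono: "S' \<subseteq> S \<Longrightarrow> Mset R S' S' \<subseteq> Mset R S S"
proof
  fix x assume "S' \<subseteq> S" "x \<in> Mset R S' S'"
  then obtain w where "set w \<subseteq> S'" "x = tr R w" unfolding Mset_iff by (elim exE conjE)
  hence "set w \<subseteq> S \<and> tmax R (tr R w) \<subseteq> S \<and> x = tr R w" using \<open>S' \<subseteq> S\<close> tmax_subset[of R w] by blast
  thus "x \<in> Mset R S S" unfolding Mset_iff by (rule exI)
qed

theorem mu_pos:
  fixes p :: real
  assumes "sym R" "finite Sg" "\<forall>a\<in>Sg. (a,a) \<in> R" "0 < p" "p < p_root R Sg"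
  shows "\<forall>S'\<subseteq>Sg. mu R S' p > 0"
proof (rule ccontr)
  assume "\<not> (\<forall>S'\<subseteq>Sg. mu R S' p > 0)"
  define A where "A = {0..p} \<inter> (\<Union>S'\<in>Pow Sg. {q. mu R S' q \<le> 0})"
  from \<open>\<not> _\<close> obtain S1 where "S1 \<subseteq> Sg" "mu R S1 p \<le> 0" by (auto simp: not_less)
  hence pA: "p \<in> A" unfolding A_def using assms(4) by auto
  have cl: "closed {q::real. mu R S' q \<le> 0}" for S'
    by (rule closed_Collect_le[OF mu_cont continuous_on_const])
  have clA: "closed A" unfolding A_def
    using assms(2) cl by (intro closed_Int closed_UN closed_atLeastAtMost) auto
  have bA: "bdd_below A" unfolding A_def by (rule bdd_belowI[of _ 0]) auto
  define q0 where "q0 = Inf A"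
  have q0A: "q0 \<in> A" unfolding q0_def using closed_contains_Inf[OF _ bA clA] pA by blast
  then obtain S0 where S0: "S0 \<subseteq> Sg" "mu R S0 q0 \<le> 0" and q0p: "0 \<le> q0" "q0 \<le> p"
    unfolding A_def by auto
  have fin: "finite S'" if "S' \<subseteq> Sg" for S' using that assms(2) finite_subset by blast
  have "q0 \<noteq> 0"
  proof
    assume "q0 = 0"
    hence "mu R S0 q0 = 1" using mu_zero[OF fin[OF S0(1)]] by simp
    with S0(2) show False by simp
  qed
  hence q0pos: "q0 > 0" using q0p by simp
  have below: "\<forall>S'\<subseteq>Sg. mu R S' q > 0" if "0 < q" "q < q0" for q
  proof (rule ccontr)
    assume "\<not> (\<forall>S'\<subseteq>Sg. mu R S' q > 0)"
    then obtain S1 where "S1 \<subseteq> Sg" "mu R S1 q \<le> 0" by (auto simp: not_less)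
    hence "q \<in> A" unfolding A_def using that q0p by auto
    hence "q0 \<le> q" unfolding q0_def using bA by (rule cInf_lower)
    thus False using that by simp
  qed
  have cmp: "mu R Sg q \<le> mu R S' q \<and> 0 < mu R Sg q" if "0 < q" "q < q0" "S' \<subseteq> Sg" for q S'
  proof -
    note b = below[OF that(1,2)]
    have Z1: "((\<lambda>x. q ^ tlen x) has_sum (mu R (S' - S') q / mu R S' q)) (Mset R S' S')"
    proof (rule Zthm[OF assms(1) fin[OF that(3)]])
      show "\<forall>a\<in>S'. (a, a) \<in> R" using assms(3) that(3) by blast
      show "0 \<le> q" using that by simp
      show "\<forall>S''\<subseteq>S'. 0 < mu R S'' q" using b that(3) by (meson order_trans)
    qed
    have Z2: "((\<lambda>x. q ^ tlen x) has_sum (mu R (Sg - Sg) q / mu R Sg q)) (Mset R Sg Sg)"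
      by (rule Zthm[OF assms(1) assms(2) assms(3)]) (use that b in simp_all)
    have "mu R (S' - S') q / mu R S' q \<le> mu R (Sg - Sg) q / mu R Sg q"
      by (rule has_sum_mono2[OF Z1 Z2 Mset_mono[OF that(3)]]) (use that in auto)
    hence "1 / mu R S' q \<le> 1 / mu R Sg q" by simp
    moreover have "mu R S' q > 0" "mu R Sg q > 0" using b that by auto
    ultimately show ?thesis by (simp add: divide_simps)
  qed
  have ev: "eventually (\<lambda>q. q \<in> {0<..<q0}) (at_left q0)" by (rule eventually_at_left_real[OF q0pos])
  have nt: "at_left q0 \<noteq> (bot :: real filter)" by simp
  have "mu R Sg q0 \<le> mu R S0 q0"
  proof (rule tendsto_le[OF nt mu_tendsto mu_tendsto])
    show "eventually (\<lambda>q. mu R Sg q \<le> mu R S0 q) (at_left q0)"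
      using ev
    proof eventually_elim
      case (elim q) thus ?case using cmp[of q S0] S0(1) by simp
    qed
  qed
  moreover have "0 \<le> mu R Sg q0"
  proof (rule tendsto_le[OF nt mu_tendsto tendsto_const])
    show "eventually (\<lambda>q. 0 \<le> mu R Sg q) (at_left q0)"
      using ev
    proof eventually_elim
      case (elim q) thus ?case using cmp[of q Sg] by simp
    qed
  qed
  ultimately have z: "mu R Sg q0 = 0" using S0 by simp
  hence "mu R Sg (complex_of_real q0) = 0" by (simp add: mu_of_real)
  hence "cmod (complex_of_real q0) \<in> cmod ` {z::complex. mu R Sg z = 0}" by blast
  moreover have "bdd_below (cmod ` {z::complex. mu R Sg z = 0})" by (rule bdd_belowI[of _ 0]) auto
  ultimately have "p_root R Sg \<le> cmod (complex_of_real q0)" unfolding p_root_def by (rule cInf_lower)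
  thus False using q0pos q0p assms(5) by simp
qed



lemma prod_list_nth: "prod_list (map f ws) = (\<Prod>i<length ws. f (ws ! i))"
  by (induction ws) (simp_all add: prod.lessThan_Suc_shift del: prod.lessThan_Suc)

lemma B_prob_eq: "B_prob R S p A = mu R S p * infsum (\<lambda>x. p ^ tlen x) (A \<inter> tmon R S)"
proof -
  have "B_prob R S p A = infsum (\<lambda>x. mu R S p * p ^ tlen x) (A \<inter> tmon R S)"
    unfolding B_prob_def by (rule infsum_cong_neutral) (auto simp: B_weight_def)
  also have "\<dots> = mu R S p * infsum (\<lambda>x. p ^ tlen x) (A \<inter> tmon R S)" by (rule infsum_cmult_right')
  finally show ?thesis .
qed

lemma D_prob_eq:
  assumes "mu R S p \<noteq> (0::real)"
  shows "D_prob R S T p A = infsum (\<lambda>x. p ^ tlen x) (A \<inter> Mset R S T) / infsum (\<lambda>x. p ^ tlen x) (Mset R S T)"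
proof -
  have e1: "A \<inter> {x. tmax R x \<subseteq> T} \<inter> tmon R S = A \<inter> Mset R S T" unfolding Mset_def by auto
  have e2: "{x. tmax R x \<subseteq> T} \<inter> tmon R S = Mset R S T" unfolding Mset_def by auto
  show ?thesis unfolding D_prob_def B_prob_eq e1 e2 using assms by simp
qed

theorem theorem1p7:
  fixes R :: "('a \<times> 'a) set" and Sg T :: "'a set" and a1 :: 'a and p :: real
  assumes fin: "finite Sg"
    and refl: "\<forall>a\<in>Sg. (a, a) \<in> R"
    and symm: "sym R"
    and p_pos: "0 < p" and p_lt: "p < p_root R Sg"
    and a1: "a1 \<in> Sg"
    and T: "T \<subseteq> Sg" "a1 \<in> T"
  defines "r \<equiv> p * mu R (Sg - Lnb R Sg a1) p / mu R (Sg - {a1}) p"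
    and "K \<equiv> (\<lambda>x. length (pyr_decomp R Sg a1 x) - 1)"
  shows "mu R (Sg - {a1}) p > 0 \<and>
     r = 1 - mu R Sg p / mu R (Sg - {a1}) p \<and>
     (\<forall>k::nat. D_prob R Sg T p {x. K x = k} = (1 - r) * r ^ k) \<and>
     (\<forall>k::nat. \<forall>ws u. length ws = k \<and> set ws \<subseteq> tmon R (Sg - {a1}) \<and> u \<in> tmon R Sg \<longrightarrow>
           D_prob R Sg T p ({x. pyr_decomp R Sg a1 x = map (\<lambda>w. tconc R w (tr R [a1])) ws @ [u]}
                                \<inter> {x. K x = k}) / D_prob R Sg T p {x. K x = k}
           = (\<Prod>i<k. D_prob R (Sg - {a1}) (Lnb R Sg a1) p {ws ! i})
             * D_prob R (Sg - {a1}) T p {u})"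
proof -
  let ?S' = "Sg - {a1}" and ?L = "Lnb R Sg a1"
  let ?g = "\<lambda>x. p ^ tlen x"
  have pos: "\<forall>S'\<subseteq>Sg. mu R S' p > 0" by (rule mu_pos[OF symm fin refl p_pos p_lt])
  have mS: "mu R Sg p > 0" and mS': "mu R ?S' p > 0" and mSL: "mu R (Sg - ?L) p > 0"
    and mST: "mu R (Sg - T) p > 0" using pos by auto
  have a1a1: "(a1,a1) \<in> R" using refl a1 by blast
  have a1L: "a1 \<in> ?L" using a1a1 a1 unfolding Lnb_def by simp
  have SL: "Sg - {b. (a1,b) \<in> R} = Sg - ?L" unfolding Lnb_def by auto
  have muS: "mu R Sg p = mu R ?S' p - p * mu R (Sg - ?L) p"
    using mu_split[OF symm fin a1 a1a1, of p] SL by simp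
  have r1: "r = 1 - mu R Sg p / mu R ?S' p" unfolding r_def using muS mS' by (simp add: field_simps)
  have finS': "finite ?S'" using fin by simp
  have reflS': "\<forall>a\<in>?S'. (a,a) \<in> R" using refl by blast
  have posS': "\<forall>S''\<subseteq>?S'. mu R S'' p > 0" using pos by blast
  define zG where "zG = mu R (Sg - ?L) p / mu R ?S' p"
  define zH where "zH = mu R (Sg - T) p / mu R ?S' p"
  define zT where "zT = mu R (Sg - T) p / mu R Sg p"
  have e1: "?S' - ?L = Sg - ?L" using a1L by auto
  have e2: "?S' - T = Sg - T" using T by auto
  have G: "(?g has_sum zG) (Mset R ?S' ?L)"
    using Zthm[OF symm finS' reflS' _ posS', of ?L] p_pos e1 unfolding zG_def by simp
  have H: "(?g has_sum zH) (Mset R ?S' T)"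
    using Zthm[OF symm finS' reflS' _ posS', of T] p_pos e2 unfolding zH_def by simp
  have ZT: "(?g has_sum zT) (Mset R Sg T)"
    using Zthm[OF symm fin refl _ pos, of T] p_pos unfolding zT_def by simp
  have rG: "r = p * zG" unfolding r_def zG_def by simp
  have zGp: "zG > 0" and zHp: "zH > 0" and zTp: "zT > 0" unfolding zG_def zH_def zT_def
    using mS mS' mSL mST by auto
  have rp: "r > 0" using rG zGp p_pos by simp
  have Kk: "(?g has_sum (r^k * zH)) {x \<in> Mset R Sg T. K x = k}" for k
    using decomp_sum_k[OF symm a1 T(2) _ G H, of k] p_pos unfolding K_def rG by simp
  have Kk': "{x. K x = k} \<inter> Mset R Sg T = {x \<in> Mset R Sg T. K x = k}" for k by auto
  have DK: "D_prob R Sg T p {x. K x = k} = r^k * zH / zT" for k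
    unfolding D_prob_eq[OF mS[THEN less_imp_neq, symmetric]] Kk' infsumI[OF Kk] infsumI[OF ZT] ..
  have zHT: "zH / zT = 1 - r" unfolding zH_def zT_def r1 using mS mS' mST by (simp add: field_simps)
  have part3: "\<forall>k::nat. D_prob R Sg T p {x. K x = k} = (1 - r) * r ^ k"
  proof
    fix k :: nat
    have "r^k * zH / zT = (zH / zT) * r^k" by simp
    thus "D_prob R Sg T p {x. K x = k} = (1 - r) * r ^ k" unfolding DK zHT .
  qed
  have part4: "\<forall>k::nat. \<forall>ws u. length ws = k \<and> set ws \<subseteq> tmon R ?S' \<and> u \<in> tmon R Sg \<longrightarrow>
           D_prob R Sg T p ({x. pyr_decomp R Sg a1 x = map (\<lambda>w. tconc R w (tr R [a1])) ws @ [u]}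
                                \<inter> {x. K x = k}) / D_prob R Sg T p {x. K x = k}
           = (\<Prod>i<k. D_prob R ?S' ?L p {ws ! i}) * D_prob R ?S' T p {u}"
  proof (intro allI impI)
    fix k ws u assume h: "length ws = k \<and> set ws \<subseteq> tmon R ?S' \<and> u \<in> tmon R Sg"
    hence lw: "length ws = k" and wsS: "set ws \<subseteq> tmon R ?S'" and uS: "u \<in> tmon R Sg" by auto
    let ?E = "{x. pyr_decomp R Sg a1 x = map (\<lambda>w. tconc R w (tr R [a1])) ws @ [u]} \<inter> {x. K x = k}"
    let ?V = "set ws \<subseteq> Mset R ?S' ?L \<and> u \<in> Mset R ?S' T"
    have Eeq: "?E \<inter> Mset R Sg T = (if ?V then {Phi R a1 ws u} else {})"
    proof (intro set_eqI iffI)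
      fix x assume x: "x \<in> ?E \<inter> Mset R Sg T"
      hence xt: "x \<in> tmon R Sg" "tmax R x \<subseteq> T" unfolding Mset_def by auto
      obtain ws' u' where wu: "set ws' \<subseteq> Mset R ?S' ?L" "u' \<in> tmon R ?S'" "x = Phi R a1 ws' u'"
        using Phi_surj[OF symm a1 xt(1)] by blast
      note pr = Phi_props[OF symm a1 wu(1,2)]
      have "map (\<lambda>w. tconc R w (tr R [a1])) ws' @ [u'] = map (\<lambda>w. tconc R w (tr R [a1])) ws @ [u]"
        using x pr(2) wu(3) by simp
      hence m: "map (\<lambda>w. tconc R w (tr R [a1])) ws' = map (\<lambda>w. tconc R w (tr R [a1])) ws" "u' = u" by auto
      have "set ws' \<union> set ws \<subseteq> range (tr R)" using wu(1) wsS Mset_range tmon_range by blast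
      hence "ws' = ws" using m(1) inj_on_map_eq_map inj_on_subset[OF Pt_inj[OF symm]] by blast
      moreover have "u \<in> Mset R ?S' T" using m(2) wu(2) pr(5) wu(3) xt(2) unfolding Mset_def by auto
      ultimately show "x \<in> (if ?V then {Phi R a1 ws u} else {})" using wu m by simp
    next
      fix x assume "x \<in> (if ?V then {Phi R a1 ws u} else {})"
      hence V: ?V and x: "x = Phi R a1 ws u" by (auto split: if_splits)
      have uu: "u \<in> tmon R ?S'" "tmax R u \<subseteq> T" using V unfolding Mset_def by auto
      note pr = Phi_props[OF symm a1 conjunct1[OF V] uu(1)]
      show "x \<in> ?E \<inter> Mset R Sg T" using pr(1,2,4) uu(2) T(2) lw x unfolding Mset_def K_def by auto
    qed
    have DE: "D_prob R Sg T p ?E = (if ?V then ?g (Phi R a1 ws u) else 0) / zT"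
      unfolding D_prob_eq[OF mS[THEN less_imp_neq, symmetric]] Eeq infsumI[OF ZT] by simp
    have nzS': "mu R ?S' p \<noteq> 0" using mS' by simp
    have D1: "D_prob R ?S' ?L p {w} = (if w \<in> Mset R ?S' ?L then ?g w else 0) / zG" for w
      unfolding D_prob_eq[OF nzS'] infsumI[OF G] by simp
    have D2: "D_prob R ?S' T p {u} = (if u \<in> Mset R ?S' T then ?g u else 0) / zH"
      unfolding D_prob_eq[OF nzS'] infsumI[OF H] by simp
    show "D_prob R Sg T p ?E / D_prob R Sg T p {x. K x = k}
        = (\<Prod>i<k. D_prob R ?S' ?L p {ws ! i}) * D_prob R ?S' T p {u}"
    proof (cases ?V)
      case True
      have uu: "u \<in> tmon R ?S'" using True unfolding Mset_def by auto
      have len: "tlen (Phi R a1 ws u) = (\<Sum>w\<leftarrow>ws. tlen w + 1) + tlen u"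
        by (rule Phi_props(3)[OF symm a1 conjunct1[OF True] uu])
      have gP: "?g (Phi R a1 ws u) = prod_list (map (\<lambda>w. p * ?g w) ws) * ?g u"
        unfolding len by (simp only: power_add pow_sum_list)
      have pl: "prod_list (map (\<lambda>w. p * ?g w) ws) = (\<Prod>i<k. p * ?g (ws ! i))"
        by (simp only: prod_list_nth lw)
      have "(\<Prod>i<k. D_prob R ?S' ?L p {ws ! i}) = (\<Prod>i<k. ?g (ws ! i) / zG)"
      proof (rule prod.cong)
        fix i assume "i \<in> {..<k}"
        hence "ws ! i \<in> Mset R ?S' ?L" using True lw by auto
        thus "D_prob R ?S' ?L p {ws ! i} = ?g (ws ! i) / zG" unfolding D1 by simp
      qed simp
      also have "\<dots> = (\<Prod>i<k. ?g (ws ! i)) / zG ^ k" by (simp add: prod_dividef)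
      finally have P1: "(\<Prod>i<k. D_prob R ?S' ?L p {ws ! i}) = (\<Prod>i<k. ?g (ws ! i)) / zG ^ k" .
      have P2: "(\<Prod>i<k. p * ?g (ws ! i)) = p ^ k * (\<Prod>i<k. ?g (ws ! i))" by (simp add: prod.distrib)
      have "D_prob R Sg T p ?E / D_prob R Sg T p {x. K x = k}
          = (p ^ k * (\<Prod>i<k. ?g (ws ! i)) * ?g u / zT) / (r^k * zH / zT)"
        unfolding DE DK using True gP pl P2 by simp
      also have "\<dots> = (\<Prod>i<k. ?g (ws ! i)) * ?g u / (zG ^ k * zH)"
        using zTp zHp zGp p_pos unfolding rG by (simp add: field_simps power_mult_distrib)
      also have "\<dots> = (\<Prod>i<k. D_prob R ?S' ?L p {ws ! i}) * D_prob R ?S' T p {u}"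
        unfolding P1 D2 using True by simp
      finally show ?thesis .
    next
      case False
      have z0: "(if ?V then ?g (Phi R a1 ws u) else 0) = 0" by (rule if_not_P[OF False])
      have l: "D_prob R Sg T p ?E / D_prob R Sg T p {x. K x = k} = 0" unfolding DE z0 by simp
      have r0: "(\<Prod>i<k. D_prob R ?S' ?L p {ws ! i}) * D_prob R ?S' T p {u} = 0"
      proof (cases "u \<in> Mset R ?S' T")
        case True
        with False obtain w where w: "w \<in> set ws" "w \<notin> Mset R ?S' ?L" by auto
        then obtain i where i: "i < k" "ws ! i = w" using lw by (metis in_set_conv_nth)
        have "D_prob R ?S' ?L p {ws ! i} = 0" unfolding D1 using w i by simp
        hence "(\<Prod>i<k. D_prob R ?S' ?L p {ws ! i}) = 0" using i(1) by (intro prod_zero) auto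
        thus ?thesis by simp
      next
        case False
        thus ?thesis unfolding D2 by simp
      qed
      show ?thesis by (simp only: l r0)
    qed
  qed
  show ?thesis using mS' r1 part3 part4 by blast
qed


end
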